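(* Let $M$ be a random measure on a Polish space $\mathbb S$ and let $\mathcal I$ be a countable semi-ring of bounded Borel subsets of $\mathbb S$ which generates the Borel $\sigma$-field and is dissecting (every open set is a countable union of sets in $\mathcal I$ and every bounded Borel set is covered by finitely many sets in $\mathcal I$). Then $(M(B_1),\dots,M(B_n))$ is negatively associated for all $n\ge1$ and all pairwise disjoint $B_1,\dots,B_n\in\mathcal I$ if and only if $(M(B_1),\dots,M(B_n))$ is negatively associated for all $n\ge1$ and all pairwise disjoint bounded Borel sets $B_1,\dots,B_n$. The same equivalence holds with "negatively associated" replaced by "positively associated".
   Context: $\mathbb S$ is Polish with a fixed complete metric; bounded sets refer to this metric. A random measure on $\mathbb S$ is a random element of the space of measures on $\mathbb S$ finite on bounded Borel sets (with the $\sigma$-field generated by the evaluations $\mu\mapsto\mu(B)$). A random vector $(Y_1,\dots,Y_n)$ in $\mathbb R^n$ is negatively associated if $\mathbb E[f(Y_J)g(Y_{J^c})]\le\mathbb E[f(Y_J)]\mathbb E[g(Y_{J^c})]$ for all $J\subset\{1,\dots,n\}$ and all bounded measurable coordinatewise non-decreasing $f:\mathbb R^J\to\mathbb R$, $g:\mathbb R^{J^c}\to\mathbb R$; it is positively associated if $\mathbb E[f(Y_J)g(Y_J)]\ge\mathbb E[f(Y_J)]\mathbb E[g(Y_J)]$ for all $J$ and all bounded measurable coordinatewise non-decreasing $f,g:\mathbb R^J\to\mathbb R$. *)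

theory Defs
  imports "HOL-Probability.Probability"
begin

definition coord_mono :: "'i set \<Rightarrow> (('i \<Rightarrow> real) \<Rightarrow> real) \<Rightarrow> bool" where
  "coord_mono J f \<longleftrightarrow>
     (\<forall>x\<in>PiE J (\<lambda>_. UNIV). \<forall>y\<in>PiE J (\<lambda>_. UNIV).
        (\<forall>j\<in>J. x j \<le> y j) \<longrightarrow> f x \<le> f y)"

definition test_fun :: "'i set \<Rightarrow> (('i \<Rightarrow> real) \<Rightarrow> real) \<Rightarrow> bool" where
  "test_fun J f \<longleftrightarrow>
     f \<in> borel_measurable (PiM J (\<lambda>_. borel)) \<and>
     (\<exists>C. \<forall>x\<in>PiE J (\<lambda>_. UNIV). \<bar>f x\<bar> \<le> C) \<and>
     coord_mono J f"

definition neg_assoc :: "'w measure \<Rightarrow> ('i \<Rightarrow> 'w \<Rightarrow> real) \<Rightarrow> 'i set \<Rightarrow> bool" where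
  "neg_assoc P Y I \<longleftrightarrow>
     (\<forall>J\<subseteq>I. \<forall>f g. test_fun J f \<longrightarrow> test_fun (I - J) g \<longrightarrow>
        integral\<^sup>L P (\<lambda>\<omega>. f (restrict (\<lambda>i. Y i \<omega>) J) * g (restrict (\<lambda>i. Y i \<omega>) (I - J)))
        \<le> integral\<^sup>L P (\<lambda>\<omega>. f (restrict (\<lambda>i. Y i \<omega>) J)) *
           integral\<^sup>L P (\<lambda>\<omega>. g (restrict (\<lambda>i. Y i \<omega>) (I - J))))"

definition pos_assoc :: "'w measure \<Rightarrow> ('i \<Rightarrow> 'w \<Rightarrow> real) \<Rightarrow> 'i set \<Rightarrow> bool" where
  "pos_assoc P Y I \<longleftrightarrow>
     (\<forall>J\<subseteq>I. \<forall>f g. test_fun J f \<longrightarrow> test_fun J g \<longrightarrow>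
        integral\<^sup>L P (\<lambda>\<omega>. f (restrict (\<lambda>i. Y i \<omega>) J) * g (restrict (\<lambda>i. Y i \<omega>) J))
        \<ge> integral\<^sup>L P (\<lambda>\<omega>. f (restrict (\<lambda>i. Y i \<omega>) J)) *
           integral\<^sup>L P (\<lambda>\<omega>. g (restrict (\<lambda>i. Y i \<omega>) J)))"

definition random_measure :: "'w measure \<Rightarrow> ('w \<Rightarrow> 'a::metric_space measure) \<Rightarrow> bool" where
  "random_measure P M \<longleftrightarrow>
     (\<forall>\<omega>\<in>space P. sets (M \<omega>) = sets borel) \<and>
     (\<forall>\<omega>\<in>space P. \<forall>B\<in>sets borel. bounded B \<longrightarrow> emeasure (M \<omega>) B < \<infinity>) \<and>
     (\<forall>B\<in>sets borel. (\<lambda>\<omega>. emeasure (M \<omega>) B) \<in> borel_measurable P)"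

definition dissecting :: "'a::metric_space set set \<Rightarrow> bool" where
  "dissecting \<I> \<longleftrightarrow>
     (\<forall>U. open U \<longrightarrow> (\<exists>C\<subseteq>\<I>. countable C \<and> U = \<Union>C)) \<and>
     (\<forall>B\<in>sets borel. bounded B \<longrightarrow> (\<exists>C\<subseteq>\<I>. finite C \<and> B \<subseteq> \<Union>C))"

end

theory Submission
  imports Defs
begin

inductive_set mono_cl :: "'a set \<Rightarrow> 'a set set \<Rightarrow> 'a set set" for \<Omega> G where
  base: "a \<in> G \<Longrightarrow> a \<in> mono_cl \<Omega> G"
| inc: "(\<And>n. A n \<in> mono_cl \<Omega> G) \<Longrightarrow> (\<And>n. A n \<subseteq> A (Suc n)) \<Longrightarrow> (\<Union>n. A n) \<in> mono_cl \<Omega> G"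
| dec: "(\<And>n. A n \<in> mono_cl \<Omega> G) \<Longrightarrow> (\<And>n. A (Suc n) \<subseteq> A n) \<Longrightarrow> (\<Inter>n. A n) \<in> mono_cl \<Omega> G"

lemma mono_cl_least:
  assumes "G \<subseteq> C"
    and "\<And>A. (\<And>n. A n \<in> C) \<Longrightarrow> (\<And>n. A n \<subseteq> A (Suc n)) \<Longrightarrow> (\<Union>n. A n) \<in> C"
    and "\<And>A. (\<And>n. A n \<in> C) \<Longrightarrow> (\<And>n. A (Suc n) \<subseteq> A n) \<Longrightarrow> (\<Inter>n. A n) \<in> C"
  shows "mono_cl \<Omega> G \<subseteq> C"
proof
  fix x assume "x \<in> mono_cl \<Omega> G" then show "x \<in> C"
    by induct (use assms in auto)
qed

lemma (in algebra) mono_cl_compl: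
  assumes "x \<in> mono_cl \<Omega> M" shows "\<Omega> - x \<in> mono_cl \<Omega> M"
proof -
  have "mono_cl \<Omega> M \<subseteq> {b. \<Omega> - b \<in> mono_cl \<Omega> M}"
  proof (rule mono_cl_least)
    show "M \<subseteq> {b. \<Omega> - b \<in> mono_cl \<Omega> M}" by (auto intro: mono_cl.base)
  next
    fix A :: "nat \<Rightarrow> 'a set" assume h: "\<And>n. A n \<in> {b. \<Omega> - b \<in> mono_cl \<Omega> M}" "\<And>n. A n \<subseteq> A (Suc n)"
    have "(\<Inter>n. \<Omega> - A n) \<in> mono_cl \<Omega> M"
      by (rule mono_cl.dec) (use h in auto)
    moreover have "(\<Inter>n. \<Omega> - A n) = \<Omega> - (\<Union>n. A n)" by auto
    ultimately show "(\<Union>n. A n) \<in> {b. \<Omega> - b \<in> mono_cl \<Omega> M}" by simp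
  next
    fix A :: "nat \<Rightarrow> 'a set" assume h: "\<And>n. A n \<in> {b. \<Omega> - b \<in> mono_cl \<Omega> M}" "\<And>n. A (Suc n) \<subseteq> A n"
    have "(\<Union>n. \<Omega> - A n) \<in> mono_cl \<Omega> M"
      by (rule mono_cl.inc) (use h in auto)
    moreover have "(\<Union>n. \<Omega> - A n) = \<Omega> - (\<Inter>n. A n)" by auto
    ultimately show "(\<Inter>n. A n) \<in> {b. \<Omega> - b \<in> mono_cl \<Omega> M}" by simp
  qed
  with assms show ?thesis by auto
qed

lemma mono_cl_Int_aux:
  assumes G: "\<And>c. c \<in> G \<Longrightarrow> a \<inter> c \<in> mono_cl \<Omega> M" and x: "x \<in> mono_cl \<Omega> G"
  shows "a \<inter> x \<in> mono_cl \<Omega> M"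
proof -
  have "mono_cl \<Omega> G \<subseteq> {b. a \<inter> b \<in> mono_cl \<Omega> M}"
  proof (rule mono_cl_least)
    show "G \<subseteq> {b. a \<inter> b \<in> mono_cl \<Omega> M}" using G by auto
  next
    fix A :: "nat \<Rightarrow> 'a set" assume h: "\<And>n. A n \<in> {b. a \<inter> b \<in> mono_cl \<Omega> M}" "\<And>n. A n \<subseteq> A (Suc n)"
    have "(\<Union>n. a \<inter> A n) \<in> mono_cl \<Omega> M"
      by (rule mono_cl.inc) (use h in auto)
    moreover have "(\<Union>n. a \<inter> A n) = a \<inter> (\<Union>n. A n)" by auto
    ultimately show "(\<Union>n. A n) \<in> {b. a \<inter> b \<in> mono_cl \<Omega> M}" by simp
  next
    fix A :: "nat \<Rightarrow> 'a set" assume h: "\<And>n. A n \<in> {b. a \<inter> b \<in> mono_cl \<Omega> M}" "\<And>n. A (Suc n) \<subseteq> A n"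
    have "(\<Inter>n. a \<inter> A n) \<in> mono_cl \<Omega> M"
      by (rule mono_cl.dec) (use h in auto)
    moreover have "(\<Inter>n. a \<inter> A n) = a \<inter> (\<Inter>n. A n)" by auto
    ultimately show "(\<Inter>n. A n) \<in> {b. a \<inter> b \<in> mono_cl \<Omega> M}" by simp
  qed
  with x show ?thesis by auto
qed

lemma (in algebra) mono_cl_Int:
  assumes "x \<in> mono_cl \<Omega> M" "y \<in> mono_cl \<Omega> M" shows "x \<inter> y \<in> mono_cl \<Omega> M"
proof -
  have 1: "a \<inter> y \<in> mono_cl \<Omega> M" if "a \<in> M" "y \<in> mono_cl \<Omega> M" for a y
    by (rule mono_cl_Int_aux[OF _ that(2)]) (use that in \<open>auto intro: mono_cl.base\<close>)
  have "y \<inter> x \<in> mono_cl \<Omega> M"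
    by (rule mono_cl_Int_aux[OF _ assms(1)]) (use 1 assms(2) in \<open>auto simp: Int_commute\<close>)
  then show ?thesis by (simp add: Int_commute)
qed

lemma (in algebra) mono_cl_sets: "x \<in> mono_cl \<Omega> M \<Longrightarrow> x \<subseteq> \<Omega>"
  proof (induct rule: mono_cl.induct)
  case (dec A) then show ?case by blast
qed (auto dest: sets_into_space)

lemma (in algebra) mono_cl_Un:
  assumes "x \<in> mono_cl \<Omega> M" "y \<in> mono_cl \<Omega> M" shows "x \<union> y \<in> mono_cl \<Omega> M"
proof -
  have "\<Omega> - ((\<Omega> - x) \<inter> (\<Omega> - y)) \<in> mono_cl \<Omega> M"
    using assms by (intro mono_cl_compl mono_cl_Int)
  moreover have "\<Omega> - ((\<Omega> - x) \<inter> (\<Omega> - y)) = x \<union> y" using assms mono_cl_sets by auto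
  ultimately show ?thesis by simp
qed

lemma (in algebra) sigma_sets_mono_cl:
  assumes "x \<in> sigma_sets \<Omega> M" shows "x \<in> mono_cl \<Omega> M"
  using assms
proof induct
  case (Basic a) then show ?case by (rule mono_cl.base)
next
  case Empty then show ?case by (auto intro: mono_cl.base)
next
  case (Compl a) from Compl(2) show ?case by (rule mono_cl_compl)
next
  case (Union A)
  have fin: "(\<Union>i<n. A i) \<in> mono_cl \<Omega> M" for n
    by (induct n) (auto simp: lessThan_Suc intro: mono_cl.base mono_cl_Un Union)
  have "(\<Union>n. \<Union>i<n. A i) \<in> mono_cl \<Omega> M"
    by (rule mono_cl.inc[OF fin]) (auto simp: lessThan_Suc)
  moreover have "(\<Union>n. \<Union>i<n. A i) = (\<Union>i. A i)" by auto
  ultimately show ?case by simp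
qed

theorem (in algebra) monotone_class:
  assumes "M \<subseteq> C"
    and "\<And>A. (\<And>n. A n \<in> C) \<Longrightarrow> (\<And>n. A n \<subseteq> A (Suc n)) \<Longrightarrow> (\<Union>n. A n) \<in> C"
    and "\<And>A. (\<And>n. A n \<in> C) \<Longrightarrow> (\<And>n. A (Suc n) \<subseteq> A n) \<Longrightarrow> (\<Inter>n. A n) \<in> C"
  shows "sigma_sets \<Omega> M \<subseteq> C"
  using sigma_sets_mono_cl mono_cl_least[OF assms] by blast

definition cont_test :: "'i set \<Rightarrow> (('i \<Rightarrow> real) \<Rightarrow> real) \<Rightarrow> bool" where
  "cont_test J f \<longleftrightarrow> test_fun J f \<and>
     (\<forall>xs x. (\<forall>j\<in>J. (\<lambda>k. xs k j) \<longlonglongrightarrow> x j) \<longrightarrow> (\<lambda>k. f (restrict (xs k) J)) \<longlonglongrightarrow> f (restrict x J))"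

definition cov_ok :: "'w measure \<Rightarrow> ('i \<Rightarrow> 'w \<Rightarrow> real) \<Rightarrow> 'i set \<Rightarrow> 'i set \<Rightarrow> real
   \<Rightarrow> ('i set \<Rightarrow> (('i\<Rightarrow>real)\<Rightarrow>real) \<Rightarrow> bool) \<Rightarrow> bool" where
  "cov_ok P Y J1 J2 s T \<longleftrightarrow> (\<forall>f g. T J1 f \<longrightarrow> T J2 g \<longrightarrow>
     s * integral\<^sup>L P (\<lambda>\<omega>. f (restrict (\<lambda>i. Y i \<omega>) J1) * g (restrict (\<lambda>i. Y i \<omega>) J2))
     \<le> s * (integral\<^sup>L P (\<lambda>\<omega>. f (restrict (\<lambda>i. Y i \<omega>) J1)) *
           integral\<^sup>L P (\<lambda>\<omega>. g (restrict (\<lambda>i. Y i \<omega>) J2))))"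

lemma neg_assoc_cov: "neg_assoc P Y I \<longleftrightarrow> (\<forall>J\<subseteq>I. cov_ok P Y J (I-J) 1 test_fun)"
  unfolding neg_assoc_def cov_ok_def by simp

lemma pos_assoc_cov: "pos_assoc P Y I \<longleftrightarrow> (\<forall>J\<subseteq>I. cov_ok P Y J J (-1) test_fun)"
  unfolding pos_assoc_def cov_ok_def by simp

lemma cont_test_test: "cont_test J f \<Longrightarrow> test_fun J f"
  by (simp add: cont_test_def)

lemma cov_ok_test_cont: "cov_ok P Y J1 J2 s test_fun \<Longrightarrow> cov_ok P Y J1 J2 s cont_test"
  unfolding cov_ok_def using cont_test_test by blast

lemma restrict_meas[measurable]:
  assumes "\<And>i. i \<in> J \<Longrightarrow> Y i \<in> borel_measurable P"
  shows "(\<lambda>\<omega>. restrict (\<lambda>i. Y i \<omega>) J) \<in> measurable P (PiM J (\<lambda>_. borel))"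
  using assms by (intro measurable_restrict) auto

lemma test_fun_comp_meas:
  assumes "test_fun J f" "\<And>i. i \<in> J \<Longrightarrow> Y i \<in> borel_measurable P"
  shows "(\<lambda>\<omega>. f (restrict (\<lambda>i. Y i \<omega>) J)) \<in> borel_measurable P"
  using assms(1) unfolding test_fun_def
  by (intro measurable_compose[OF restrict_meas[OF assms(2)]]) auto

lemma test_fun_bound:
  assumes "test_fun J f" obtains C where "\<And>x. \<bar>f (restrict x J)\<bar> \<le> C" "C \<ge> 0"
proof -
  from assms obtain C where C: "\<forall>x\<in>PiE J (\<lambda>_. UNIV). \<bar>f x\<bar> \<le> C" unfolding test_fun_def by blast
  have "\<bar>f (restrict x J)\<bar> \<le> C" for x using C by auto
  moreover have "C \<ge> 0" using C[rule_format, of "restrict (\<lambda>_. 0) J"] by auto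
  ultimately show ?thesis using that by blast
qed

lemma cov_ok_limit:
  assumes P: "prob_space P"
    and Ykm: "\<And>k i. i \<in> J1 \<union> J2 \<Longrightarrow> Yk k i \<in> borel_measurable P"
    and Ym: "\<And>i. i \<in> J1 \<union> J2 \<Longrightarrow> Y i \<in> borel_measurable P"
    and lim: "\<And>\<omega> i. \<omega> \<in> space P \<Longrightarrow> i \<in> J1 \<union> J2 \<Longrightarrow> (\<lambda>k. Yk k i \<omega>) \<longlonglongrightarrow> Y i \<omega>"
    and ok: "\<And>k. cov_ok P (Yk k) J1 J2 s cont_test"
  shows "cov_ok P Y J1 J2 s cont_test"
  unfolding cov_ok_def
proof (intro allI impI)
  interpret prob_space P by fact
  fix f g assume f: "cont_test J1 f" and g: "cont_test J2 g"
  have tf: "test_fun J1 f" and tg: "test_fun J2 g" using f g by (auto simp: cont_test_def)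
  obtain Cf where Cf: "\<And>x. \<bar>f (restrict x J1)\<bar> \<le> Cf" "Cf \<ge> 0" using test_fun_bound[OF tf] by blast
  obtain Cg where Cg: "\<And>x. \<bar>g (restrict x J2)\<bar> \<le> Cg" "Cg \<ge> 0" using test_fun_bound[OF tg] by blast
  have mf: "(\<lambda>\<omega>. f (restrict (\<lambda>i. Y i \<omega>) J1)) \<in> borel_measurable P"
    by (rule test_fun_comp_meas[OF tf]) (use Ym in auto)
  have mg: "(\<lambda>\<omega>. g (restrict (\<lambda>i. Y i \<omega>) J2)) \<in> borel_measurable P"
    by (rule test_fun_comp_meas[OF tg]) (use Ym in auto)
  have mfk: "(\<lambda>\<omega>. f (restrict (\<lambda>i. Yk k i \<omega>) J1)) \<in> borel_measurable P" for k
    by (rule test_fun_comp_meas[OF tf]) (use Ykm in auto)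
  have mgk: "(\<lambda>\<omega>. g (restrict (\<lambda>i. Yk k i \<omega>) J2)) \<in> borel_measurable P" for k
    by (rule test_fun_comp_meas[OF tg]) (use Ykm in auto)
  have lf: "(\<lambda>k. f (restrict (\<lambda>i. Yk k i \<omega>) J1)) \<longlonglongrightarrow> f (restrict (\<lambda>i. Y i \<omega>) J1)" if "\<omega> \<in> space P" for \<omega>
    using f lim[OF that] unfolding cont_test_def by auto
  have lg: "(\<lambda>k. g (restrict (\<lambda>i. Yk k i \<omega>) J2)) \<longlonglongrightarrow> g (restrict (\<lambda>i. Y i \<omega>) J2)" if "\<omega> \<in> space P" for \<omega>
    using g lim[OF that] unfolding cont_test_def by auto
  have L1: "(\<lambda>k. integral\<^sup>L P (\<lambda>\<omega>. f (restrict (\<lambda>i. Yk k i \<omega>) J1))) \<longlonglongrightarrow> integral\<^sup>L P (\<lambda>\<omega>. f (restrict (\<lambda>i. Y i \<omega>) J1))"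
    by (rule integral_dominated_convergence[where w="\<lambda>_. Cf"]) (use mf mfk lf Cf in auto)
  have L2: "(\<lambda>k. integral\<^sup>L P (\<lambda>\<omega>. g (restrict (\<lambda>i. Yk k i \<omega>) J2))) \<longlonglongrightarrow> integral\<^sup>L P (\<lambda>\<omega>. g (restrict (\<lambda>i. Y i \<omega>) J2))"
    by (rule integral_dominated_convergence[where w="\<lambda>_. Cg"]) (use mg mgk lg Cg in auto)
  have L3: "(\<lambda>k. integral\<^sup>L P (\<lambda>\<omega>. f (restrict (\<lambda>i. Yk k i \<omega>) J1) * g (restrict (\<lambda>i. Yk k i \<omega>) J2)))
     \<longlonglongrightarrow> integral\<^sup>L P (\<lambda>\<omega>. f (restrict (\<lambda>i. Y i \<omega>) J1) * g (restrict (\<lambda>i. Y i \<omega>) J2))"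
  proof (rule integral_dominated_convergence[where w="\<lambda>_. Cf * Cg"])
    show "AE x in P. (\<lambda>k. f (restrict (\<lambda>i. Yk k i x) J1) * g (restrict (\<lambda>i. Yk k i x) J2)) \<longlonglongrightarrow>
         f (restrict (\<lambda>i. Y i x) J1) * g (restrict (\<lambda>i. Y i x) J2)"
      using lf lg by (auto intro!: tendsto_mult)
    show "AE x in P. norm (f (restrict (\<lambda>i. Yk k i x) J1) * g (restrict (\<lambda>i. Yk k i x) J2)) \<le> Cf * Cg" for k
      using Cf Cg by (auto simp: abs_mult intro!: mult_mono)
  qed (use mf mg mfk mgk in auto)
  show "s * integral\<^sup>L P (\<lambda>\<omega>. f (restrict (\<lambda>i. Y i \<omega>) J1) * g (restrict (\<lambda>i. Y i \<omega>) J2))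
     \<le> s * (integral\<^sup>L P (\<lambda>\<omega>. f (restrict (\<lambda>i. Y i \<omega>) J1)) * integral\<^sup>L P (\<lambda>\<omega>. g (restrict (\<lambda>i. Y i \<omega>) J2)))"
  proof (rule LIMSEQ_le)
    show "(\<lambda>k. s * integral\<^sup>L P (\<lambda>\<omega>. f (restrict (\<lambda>i. Yk k i \<omega>) J1) * g (restrict (\<lambda>i. Yk k i \<omega>) J2))) \<longlonglongrightarrow> s * integral\<^sup>L P (\<lambda>\<omega>. f (restrict (\<lambda>i. Y i \<omega>) J1) * g (restrict (\<lambda>i. Y i \<omega>) J2))"
      by (intro tendsto_mult L3 tendsto_const)
    show "(\<lambda>k. s * (integral\<^sup>L P (\<lambda>\<omega>. f (restrict (\<lambda>i. Yk k i \<omega>) J1)) * integral\<^sup>L P (\<lambda>\<omega>. g (restrict (\<lambda>i. Yk k i \<omega>) J2)))) \<longlonglongrightarrow> s * (integral\<^sup>L P (\<lambda>\<omega>. f (restrict (\<lambda>i. Y i \<omega>) J1)) * integral\<^sup>L P (\<lambda>\<omega>. g (restrict (\<lambda>i. Y i \<omega>) J2)))"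
      by (intro tendsto_mult L1 L2 tendsto_const)
    show "\<exists>N. \<forall>n\<ge>N. s * integral\<^sup>L P (\<lambda>\<omega>. f (restrict (\<lambda>i. Yk n i \<omega>) J1) * g (restrict (\<lambda>i. Yk n i \<omega>) J2))
        \<le> s * (integral\<^sup>L P (\<lambda>\<omega>. f (restrict (\<lambda>i. Yk n i \<omega>) J1)) * integral\<^sup>L P (\<lambda>\<omega>. g (restrict (\<lambda>i. Yk n i \<omega>) J2)))"
      using ok f g unfolding cov_ok_def by blast
  qed
qed

definition updist :: "nat set \<Rightarrow> (nat \<Rightarrow> real) \<Rightarrow> (nat \<Rightarrow> real) \<Rightarrow> real" where
  "updist J k y = (\<Sum>j\<in>J. max 0 (k j - y j))"

definition cdist :: "nat set \<Rightarrow> (nat \<Rightarrow> real) set \<Rightarrow> (nat \<Rightarrow> real) \<Rightarrow> real" where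
  "cdist J K y = (INF k\<in>K. updist J k y)"

definition bump :: "nat set \<Rightarrow> (nat \<Rightarrow> real) set \<Rightarrow> nat \<Rightarrow> (nat \<Rightarrow> real) \<Rightarrow> real" where
  "bump J K m y = max 0 (1 - real m * cdist J K y)"

lemma updist_nonneg: "0 \<le> updist J k y"
  unfolding updist_def by (intro sum_nonneg) auto

lemma updist_lip: "\<bar>updist J k y - updist J k z\<bar> \<le> (\<Sum>j\<in>J. \<bar>y j - z j\<bar>)"
proof -
  have "\<bar>updist J k y - updist J k z\<bar> = \<bar>\<Sum>j\<in>J. max 0 (k j - y j) - max 0 (k j - z j)\<bar>"
    unfolding updist_def by (simp add: sum_subtractf)
  also have "\<dots> \<le> (\<Sum>j\<in>J. \<bar>max 0 (k j - y j) - max 0 (k j - z j)\<bar>)" by (rule sum_abs)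
  also have "\<dots> \<le> (\<Sum>j\<in>J. \<bar>y j - z j\<bar>)" by (intro sum_mono) linarith
  finally show ?thesis .
qed

lemma updist_lip2: "\<bar>updist J k y - updist J k' y\<bar> \<le> (\<Sum>j\<in>J. \<bar>k j - k' j\<bar>)"
proof -
  have "\<bar>updist J k y - updist J k' y\<bar> = \<bar>\<Sum>j\<in>J. max 0 (k j - y j) - max 0 (k' j - y j)\<bar>"
    unfolding updist_def by (simp add: sum_subtractf)
  also have "\<dots> \<le> (\<Sum>j\<in>J. \<bar>max 0 (k j - y j) - max 0 (k' j - y j)\<bar>)" by (rule sum_abs)
  also have "\<dots> \<le> (\<Sum>j\<in>J. \<bar>k j - k' j\<bar>)" by (intro sum_mono) linarith
  finally show ?thesis .
qed

lemma updist_antimono: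
  assumes "\<And>j. j \<in> J \<Longrightarrow> y j \<le> z j" shows "updist J k z \<le> updist J k y"
  unfolding updist_def
proof (intro sum_mono)
  fix j assume "j \<in> J" then have "y j \<le> z j" by (rule assms)
  then show "max 0 (k j - z j) \<le> max 0 (k j - y j)" by linarith
qed

lemma updist_zero: "finite J \<Longrightarrow> updist J k y = 0 \<longleftrightarrow> (\<forall>j\<in>J. k j \<le> y j)"
  unfolding updist_def by (subst sum_nonneg_eq_0_iff) auto

lemma updist_restrict: "updist J k (restrict y J) = updist J k y"
  unfolding updist_def by (intro sum.cong) auto

lemma updist_self: "updist J k k = 0"
  unfolding updist_def by simp

lemma bdd_updist: "bdd_below ((\<lambda>k. updist J k y) ` K)"
  by (rule bdd_belowI[of _ 0]) (auto simp: updist_nonneg)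

lemma cdist_le: "k \<in> K \<Longrightarrow> cdist J K y \<le> updist J k y"
  unfolding cdist_def by (rule cINF_lower[OF bdd_updist])

lemma cdist_nonneg: "K \<noteq> {} \<Longrightarrow> 0 \<le> cdist J K y"
  unfolding cdist_def by (rule cINF_greatest) (auto simp: updist_nonneg)

lemma cdist_upper: "K \<noteq> {} \<Longrightarrow> cdist J K y \<le> cdist J K z + (\<Sum>j\<in>J. \<bar>y j - z j\<bar>)"
proof -
  assume K: "K \<noteq> {}"
  have "cdist J K y - (\<Sum>j\<in>J. \<bar>y j - z j\<bar>) \<le> cdist J K z"
    unfolding cdist_def[of J K z]
  proof (rule cINF_greatest[OF K])
    fix k assume "k \<in> K"
    then have "cdist J K y \<le> updist J k y" by (rule cdist_le)
    moreover have "updist J k y \<le> updist J k z + (\<Sum>j\<in>J. \<bar>y j - z j\<bar>)"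
      using updist_lip[of J k y z] by linarith
    ultimately show "cdist J K y - (\<Sum>j\<in>J. \<bar>y j - z j\<bar>) \<le> updist J k z" by linarith
  qed
  then show ?thesis by linarith
qed

lemma cdist_lip: "K \<noteq> {} \<Longrightarrow> \<bar>cdist J K y - cdist J K z\<bar> \<le> (\<Sum>j\<in>J. \<bar>y j - z j\<bar>)"
  using cdist_upper[of K J y z] cdist_upper[of K J z y]
  by (simp add: abs_minus_commute abs_le_iff)

lemma cdist_antimono: "K \<noteq> {} \<Longrightarrow> (\<And>j. j \<in> J \<Longrightarrow> y j \<le> z j) \<Longrightarrow> cdist J K z \<le> cdist J K y"
  unfolding cdist_def
  by (rule cINF_mono[OF _ bdd_updist]) (auto intro!: bexI updist_antimono)

lemma cdist_restrict: "cdist J K (restrict y J) = cdist J K y"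
  unfolding cdist_def updist_restrict ..

lemma sum_abs_tendsto0:
  fixes X :: "'a \<Rightarrow> nat \<Rightarrow> real"
  assumes "\<And>j. j \<in> J \<Longrightarrow> ((\<lambda>t. X t j) \<longlongrightarrow> x j) F"
  shows "((\<lambda>t. \<Sum>j\<in>J. \<bar>X t j - x j\<bar>) \<longlongrightarrow> 0) F"
proof -
  have "((\<lambda>t. \<Sum>j\<in>J. \<bar>X t j - x j\<bar>) \<longlongrightarrow> (\<Sum>j\<in>J. \<bar>x j - x j\<bar>)) F"
    by (intro tendsto_sum tendsto_rabs tendsto_diff assms tendsto_const)
  then show ?thesis by simp
qed

lemma cdist_tendsto:
  fixes X :: "'a \<Rightarrow> nat \<Rightarrow> real"
  assumes K: "K \<noteq> {}" and "\<And>j. j \<in> J \<Longrightarrow> ((\<lambda>t. X t j) \<longlongrightarrow> x j) F"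
  shows "((\<lambda>t. cdist J K (X t)) \<longlongrightarrow> cdist J K x) F"
proof -
  have 1: "\<forall>\<^sub>F t in F. norm (cdist J K (X t) - cdist J K x) \<le> (\<Sum>j\<in>J. \<bar>X t j - x j\<bar>)"
    using cdist_lip[OF K] by auto
  have 2: "((\<lambda>t. \<Sum>j\<in>J. \<bar>X t j - x j\<bar>) \<longlongrightarrow> 0) F"
    by (rule sum_abs_tendsto0) (use assms in auto)
  show ?thesis by (rule LIM_zero_cancel, rule Lim_null_comparison[OF 1 2])
qed

lemma cdist_cont: assumes K: "K \<noteq> {}" shows "continuous_on UNIV (cdist J K)"
  unfolding continuous_on_def
proof (intro ballI)
  fix x :: "nat \<Rightarrow> real"
  show "(cdist J K \<longlongrightarrow> cdist J K x) (at x within UNIV)"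
  proof (rule cdist_tendsto[OF K])
    fix j
    have "continuous_on UNIV (\<lambda>x::nat\<Rightarrow>real. x j)" by simp
    then show "((\<lambda>t. t j) \<longlongrightarrow> x j) (at x within UNIV)"
      unfolding continuous_on_def by auto
  qed
qed

lemma updist_cont: "continuous_on UNIV (\<lambda>k. updist J k y)"
  unfolding updist_def
  by (intro continuous_intros continuous_on_product_coordinates)

lemma cdist_meas:
  assumes K: "K \<noteq> {}"
  shows "(\<lambda>y. cdist J K y) \<in> borel_measurable (PiM J (\<lambda>_. borel))"
proof -
  let ?e = "\<lambda>y::nat\<Rightarrow>real. \<lambda>i\<in>UNIV. if i \<in> J then y i else 0"
  have e: "?e \<in> measurable (PiM J (\<lambda>_. borel)) (PiM UNIV (\<lambda>_. borel))"
  proof (intro measurable_restrict)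
    fix i show "(\<lambda>x. if i \<in> J then x i else 0) \<in> borel_measurable (PiM J (\<lambda>_. borel))"
      by (cases "i \<in> J") auto
  qed
  have e': "?e \<in> measurable (PiM J (\<lambda>_. borel)) borel"
    using e by (simp add: measurable_cong_sets[OF refl sets_PiM_equal_borel])
  have c: "cdist J K \<in> borel_measurable borel"
    by (rule borel_measurable_continuous_onI[OF cdist_cont[OF K]])
  have "(\<lambda>y. cdist J K (?e y)) \<in> borel_measurable (PiM J (\<lambda>_. borel))"
    by (rule measurable_compose[OF e' c])
  moreover have "cdist J K (?e y) = cdist J K y" for y
    unfolding cdist_def updist_def by (intro INF_cong sum.cong) auto
  ultimately show ?thesis by simp
qed

lemma cdist_zero:
  assumes K: "compact K" "K \<noteq> {}" and J: "finite J" and z: "cdist J K y = 0"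
  shows "\<exists>k\<in>K. \<forall>j\<in>J. k j \<le> y j"
proof -
  obtain k where k: "k \<in> K" "\<And>k'. k' \<in> K \<Longrightarrow> updist J k y \<le> updist J k' y"
    using continuous_attains_inf[OF K continuous_on_subset[OF updist_cont subset_UNIV]] by blast
  have "updist J k y \<le> cdist J K y"
    unfolding cdist_def by (rule cINF_greatest[OF K(2)]) (use k in auto)
  then have "updist J k y = 0" using z updist_nonneg[of J k y] by linarith
  then show ?thesis using k(1) updist_zero[OF J] by blast
qed

lemma bump_range: "0 \<le> bump J K m y" "K \<noteq> {} \<Longrightarrow> bump J K m y \<le> 1"
  unfolding bump_def using cdist_nonneg[of K J y] by (auto simp: mult_nonneg_nonneg)

lemma bump_restrict: "bump J K m (restrict y J) = bump J K m y"
  unfolding bump_def cdist_restrict ..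

lemma cont_test_bump:
  assumes K: "K \<noteq> {}"
  shows "cont_test J (bump J K m)"
  unfolding cont_test_def test_fun_def coord_mono_def
proof (intro conjI allI impI ballI)
  show "bump J K m \<in> borel_measurable (PiM J (\<lambda>_. borel))"
    unfolding bump_def using cdist_meas[OF K] by measurable
  show "\<exists>C. \<forall>x\<in>PiE J (\<lambda>_. UNIV). \<bar>bump J K m x\<bar> \<le> C"
    using bump_range(2)[OF K] bump_range(1) by (intro exI[of _ 1]) auto
  fix x y :: "nat \<Rightarrow> real" assume "\<forall>j\<in>J. x j \<le> y j"
  then have "cdist J K y \<le> cdist J K x" by (intro cdist_antimono[OF K]) auto
  then have "real m * cdist J K y \<le> real m * cdist J K x" by (intro mult_left_mono) auto
  then show "bump J K m x \<le> bump J K m y" unfolding bump_def by linarith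
next
  fix xs :: "nat \<Rightarrow> nat \<Rightarrow> real" and x
  assume "\<forall>j\<in>J. (\<lambda>k. xs k j) \<longlonglongrightarrow> x j"
  then have "(\<lambda>k. cdist J K (xs k)) \<longlonglongrightarrow> cdist J K x"
    by (intro cdist_tendsto[OF K]) auto
  then have "(\<lambda>k. bump J K m (xs k)) \<longlonglongrightarrow> bump J K m x"
    unfolding bump_def by (intro tendsto_intros)
  then show "(\<lambda>k. bump J K m (restrict (xs k) J)) \<longlonglongrightarrow> bump J K m (restrict x J)"
    by (simp add: bump_restrict)
qed

lemma cont_test_const: "cont_test J (\<lambda>_. c)"
  unfolding cont_test_def test_fun_def coord_mono_def by auto

lemma indicator_approx:
  fixes \<mu> :: "(nat \<Rightarrow> real) measure"
  assumes prob: "prob_space \<mu>" and sets: "sets \<mu> = sets borel" and J: "finite J"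
    and S: "S \<in> sets borel" and Sinc: "\<And>x y. x \<in> S \<Longrightarrow> (\<And>j. j\<in>J \<Longrightarrow> x j \<le> y j) \<Longrightarrow> y \<in> S"
    and e: "\<epsilon> > 0"
  shows "\<exists>h. cont_test J h \<and> (\<forall>x. 0 \<le> h (restrict x J) \<and> h (restrict x J) \<le> 1) \<and>
           integral\<^sup>L \<mu> (\<lambda>x. \<bar>indicator S x - h (restrict x J)\<bar>) \<le> \<epsilon>"
proof -
  interpret prob_space \<mu> by fact
  have sp: "space \<mu> = UNIV" using sets_eq_imp_space_eq[OF sets] by simp
  have Sm: "S \<in> sets \<mu>" using S sets by simp
  have NSm: "- S \<in> sets \<mu>" using sets.compl_sets[OF Sm] sp by (simp add: Compl_eq_Diff_UNIV)
  have reg: "emeasure \<mu> S = (SUP K \<in> {K. K \<subseteq> S \<and> compact K}. emeasure \<mu> K)"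
    by (rule inner_regular[OF sets _ S]) simp
  obtain K where K: "K \<subseteq> S" "compact K" "measure \<mu> S \<le> measure \<mu> K + \<epsilon>/2"
  proof (cases "measure \<mu> S \<le> \<epsilon>/2")
    case True then show ?thesis using that[of "{}"] by auto
  next
    case False
    then have "ennreal (measure \<mu> S - \<epsilon>/2) < emeasure \<mu> S"
      using e by (simp add: emeasure_eq_measure ennreal_lessI)
    then obtain K where "K \<subseteq> S" "compact K" "ennreal (measure \<mu> S - \<epsilon>/2) < emeasure \<mu> K"
      unfolding reg less_SUP_iff by blast
    moreover have "measure \<mu> S - \<epsilon>/2 < measure \<mu> K"
    proof (rule ccontr)
      assume "\<not> measure \<mu> S - \<epsilon>/2 < measure \<mu> K"
      then have "ennreal (measure \<mu> K) \<le> ennreal (measure \<mu> S - \<epsilon>/2)" by (intro ennreal_leI) simp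
      with \<open>ennreal (measure \<mu> S - \<epsilon>/2) < emeasure \<mu> K\<close> show False
        by (simp add: emeasure_eq_measure)
    qed
    ultimately show ?thesis using that[of K] by auto
  qed
  have Kb: "K \<in> sets borel" using K(2) by (simp add: compact_imp_closed borel_closed)
  then have Km: "K \<in> sets \<mu>" using sets by simp
  have mSK: "measure \<mu> (S - K) \<le> \<epsilon>/2"
    using finite_measure_Diff[OF Sm Km K(1)] K(3) by simp
  show ?thesis
  proof (cases "K = {}")
    case True
    have "integral\<^sup>L \<mu> (\<lambda>x. \<bar>indicator S x - (\<lambda>_. 0::real) (restrict x J)\<bar>) = measure \<mu> S"
      using sp by simp
    also have "\<dots> \<le> \<epsilon>" using K(3) True e by simp
    finally have "integral\<^sup>L \<mu> (\<lambda>x. \<bar>indicator S x - (\<lambda>_. 0::real) (restrict x J)\<bar>) \<le> \<epsilon>" .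
    then show ?thesis using cont_test_const[of J 0] by (intro exI[of _ "\<lambda>_. 0"]) simp
  next
    case Kne: False
    have bm: "(\<lambda>x. bump J K m x) \<in> borel_measurable \<mu>" for m
    proof -
      have "cdist J K \<in> borel_measurable borel"
        by (rule borel_measurable_continuous_onI[OF cdist_cont[OF Kne]])
      then have "(\<lambda>x. bump J K m x) \<in> borel_measurable borel"
        unfolding bump_def by measurable
      then show ?thesis using measurable_cong_sets[OF sets refl] by blast
    qed
    have pos: "0 < cdist J K x" if "x \<notin> S" for x
    proof -
      have "cdist J K x \<noteq> 0"
      proof
        assume "cdist J K x = 0"
        then obtain k where "k \<in> K" "\<forall>j\<in>J. k j \<le> x j" using cdist_zero[OF K(2) Kne J] by blast
        then show False using Sinc[of k x] K(1) that by auto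
      qed
      then show ?thesis using cdist_nonneg[OF Kne, of J x] by linarith
    qed
    have lim0: "(\<lambda>m. indicator (- S) x * bump J K m x) \<longlonglongrightarrow> 0" for x
    proof (cases "x \<in> S")
      case True then show ?thesis by simp
    next
      case False
      have "eventually (\<lambda>m. indicator (- S) x * bump J K m x = 0) sequentially"
      proof -
        obtain N :: nat where N: "1 / cdist J K x < N" using reals_Archimedean2 by blast
        have "indicator (- S) x * bump J K m x = 0" if "m \<ge> N" for m
        proof -
          have "1 < real N * cdist J K x" using N pos[OF False] by (simp add: field_simps)
          also have "\<dots> \<le> real m * cdist J K x" using that pos[OF False] by (intro mult_right_mono) auto
          finally show ?thesis unfolding bump_def by simp
        qed
        then show ?thesis unfolding eventually_sequentially by blast
      qed
      then show ?thesis by (rule tendsto_eventually)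
    qed
    have L: "(\<lambda>m. integral\<^sup>L \<mu> (\<lambda>x. indicator (- S) x * bump J K m x)) \<longlonglongrightarrow> integral\<^sup>L \<mu> (\<lambda>x. 0)"
    proof (rule integral_dominated_convergence[where w="\<lambda>_. 1"])
      show "AE x in \<mu>. norm (indicator (- S) x * bump J K m x) \<le> 1" for m
      proof (intro AE_I2)
        fix x
        have "0 \<le> bump J K m x" "bump J K m x \<le> 1" using bump_range(1) bump_range(2)[OF Kne] by auto
        then show "norm (indicator (- S) x * bump J K m x) \<le> (1::real)" by (cases "x \<in> S") auto
      qed
      show "(\<lambda>x. indicator (- S) x * bump J K m x) \<in> borel_measurable \<mu>" for m
        using bm NSm by (intro borel_measurable_times borel_measurable_indicator) auto
      show "AE x in \<mu>. (\<lambda>m. indicator (- S) x * bump J K m x) \<longlonglongrightarrow> 0"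
        using lim0 by simp
    qed simp_all
    then have "eventually (\<lambda>m. integral\<^sup>L \<mu> (\<lambda>x. indicator (- S) x * bump J K m x) < \<epsilon>/2) sequentially"
      using e by (intro order_tendstoD(2)) auto
    then obtain m where m: "integral\<^sup>L \<mu> (\<lambda>x. indicator (- S) x * bump J K m x) < \<epsilon>/2"
      using eventually_sequentially by auto
    have ptw: "\<bar>indicator S x - bump J K m x\<bar> \<le> indicator (S - K) x + indicator (- S) x * bump J K m x" for x
    proof -
      have b1: "0 \<le> bump J K m x" "bump J K m x \<le> 1" using bump_range(1) bump_range(2)[OF Kne] by auto
      show ?thesis
      proof (cases "x \<in> K")
        case True
        have "cdist J K x \<le> 0" using cdist_le[OF True, of J x] updist_self[of J x] by simp
        then have "bump J K m x = 1" using cdist_nonneg[OF Kne, of J x] unfolding bump_def by simp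
        then show ?thesis using True K(1) by auto
      next
        case False then show ?thesis using b1 by (cases "x \<in> S") (auto simp: indicator_def)
      qed
    qed
    have int1: "integrable \<mu> (\<lambda>x. \<bar>indicator S x - bump J K m x\<bar>)"
    proof (rule integrable_const_bound[where B=2])
      show "AE x in \<mu>. norm \<bar>indicator S x - bump J K m x\<bar> \<le> (2::real)"
      proof (intro AE_I2)
        fix x
        have "0 \<le> bump J K m x" "bump J K m x \<le> 1" using bump_range(1) bump_range(2)[OF Kne] by auto
        then show "norm \<bar>indicator S x - bump J K m x\<bar> \<le> (2::real)" by (cases "x \<in> S") auto
      qed
      show "(\<lambda>x. \<bar>indicator S x - bump J K m x\<bar>) \<in> borel_measurable \<mu>"
        using bm Sm by (intro borel_measurable_abs borel_measurable_diff borel_measurable_indicator) auto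
    qed
    have int2: "integrable \<mu> (\<lambda>x. indicator (- S) x * bump J K m x)"
    proof (rule integrable_const_bound[where B=1])
      show "AE x in \<mu>. norm (indicator (- S) x * bump J K m x) \<le> (1::real)"
      proof (intro AE_I2)
        fix x
        have "0 \<le> bump J K m x" "bump J K m x \<le> 1" using bump_range(1) bump_range(2)[OF Kne] by auto
        then show "norm (indicator (- S) x * bump J K m x) \<le> (1::real)" by (cases "x \<in> S") auto
      qed
      show "(\<lambda>x. indicator (- S) x * bump J K m x) \<in> borel_measurable \<mu>"
        using bm NSm by (intro borel_measurable_times borel_measurable_indicator) auto
    qed
    have int3: "integrable \<mu> (indicator (S - K) :: _ \<Rightarrow> real)"
      using Sm Km by (intro integrable_real_indicator) (auto simp: emeasure_eq_measure)
    have "integral\<^sup>L \<mu> (\<lambda>x. \<bar>indicator S x - bump J K m (restrict x J)\<bar>)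
        = integral\<^sup>L \<mu> (\<lambda>x. \<bar>indicator S x - bump J K m x\<bar>)" by (simp add: bump_restrict)
    also have "\<dots> \<le> integral\<^sup>L \<mu> (\<lambda>x. indicator (S - K) x + indicator (- S) x * bump J K m x)"
      by (intro integral_mono int1 Bochner_Integration.integrable_add int2 int3 ptw)
    also have "\<dots> = measure \<mu> (S - K) + integral\<^sup>L \<mu> (\<lambda>x. indicator (- S) x * bump J K m x)"
      using int2 int3 sp by simp
    also have "\<dots> \<le> \<epsilon>" using mSK m by simp
    finally have "integral\<^sup>L \<mu> (\<lambda>x. \<bar>indicator S x - bump J K m (restrict x J)\<bar>) \<le> \<epsilon>" .
    then show ?thesis
      using cont_test_bump[OF Kne, of J m] bump_range(1)[of J K m] bump_range(2)[OF Kne, of J m]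
      by (intro exI[of _ "bump J K m"]) simp
  qed
qed

lemma count_approx:
  fixes v C \<delta> :: real and N :: nat
  assumes N: "N > 0" and v: "-C \<le> v" "v \<le> C" and d: "\<delta> = 2*C/N"
  shows "\<bar>v - (-C + \<delta> * (\<Sum>k\<in>{1..N}. if -C + real k * \<delta> < v then 1 else 0))\<bar> \<le> \<delta>"
proof (cases "C = 0")
  case True then show ?thesis using v d by simp
next
  case False
  then have C: "C > 0" using v by linarith
  then have dp: "\<delta> > 0" using d N by simp
  define q where "q = (v + C) / \<delta>"
  have q0: "0 \<le> q" using v dp unfolding q_def by simp
  have qN: "q \<le> N" using v dp N unfolding q_def d by (simp add: field_simps)
  define m where "m = nat (\<lceil>q\<rceil> - 1)"
  have iff: "(-C + real k * \<delta> < v) \<longleftrightarrow> real k < q" for k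
    unfolding q_def using dp by (simp add: field_simps)
  have set: "{k\<in>{1..N}. real k < q} = {1..m}"
  proof safe
    fix k assume "k \<in> {1..N}" "real k < q"
    then have "int k < \<lceil>q\<rceil>" by (simp add: less_ceiling_iff)
    then show "k \<in> {1..m}" using \<open>k \<in> {1..N}\<close> unfolding m_def by auto
  next
    fix k assume k: "k \<in> {1..m}"
    then have "int k \<le> \<lceil>q\<rceil> - 1" unfolding m_def by auto
    then have "int k < \<lceil>q\<rceil>" by simp
    then show "real k < q" by (simp add: less_ceiling_iff)
    have "\<lceil>q\<rceil> \<le> int N" using qN by (simp add: ceiling_le_iff)
    then show "k \<in> {1..N}" using k unfolding m_def by auto
  qed
  have sum: "(\<Sum>k\<in>{1..N}. if -C + real k * \<delta> < v then 1 else 0 :: real) = real m"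
  proof -
    have "(\<Sum>k\<in>{1..N}. if -C + real k * \<delta> < v then 1 else 0 :: real)
        = (\<Sum>k\<in>{1..N}. if real k < q then 1 else 0 :: real)" unfolding iff by (rule refl)
    also have "\<dots> = real (card {k\<in>{1..N}. real k < q})"
      by (simp add: sum.If_cases Int_def)
    also have "\<dots> = real m" by (subst set) simp
    finally show ?thesis .
  qed
  have m1: "real m \<le> q"
  proof (cases "\<lceil>q\<rceil> - 1 < 0")
    case True then show ?thesis using q0 unfolding m_def by simp
  next
    case False
    then have "real m = of_int (\<lceil>q\<rceil> - 1)" unfolding m_def by simp
    also have "\<dots> \<le> q" using ceiling_correct[of q] by linarith
    finally show ?thesis .
  qed
  have m2: "q \<le> real m + 1"
  proof -
    have "q \<le> of_int \<lceil>q\<rceil>" by (rule le_of_int_ceiling)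
    also have "of_int \<lceil>q\<rceil> \<le> real m + 1" unfolding m_def by linarith
    finally show ?thesis .
  qed
  have "v - (-C + \<delta> * real m) = \<delta> * (q - real m)"
    unfolding q_def using dp by (simp add: field_simps)
  moreover have "\<bar>\<delta> * (q - real m)\<bar> \<le> \<delta>"
    using m1 m2 dp by (simp add: abs_mult)
  ultimately show ?thesis unfolding sum by simp
qed

lemma restrict_borel: "(\<lambda>x::nat\<Rightarrow>real. restrict x J) \<in> measurable borel (PiM J (\<lambda>_. borel))"
proof -
  have "(\<lambda>x::nat\<Rightarrow>real. \<lambda>i\<in>J. x i) \<in> measurable (PiM UNIV (\<lambda>_. borel)) (PiM J (\<lambda>_. borel))"
    by (intro measurable_restrict) simp
  then show ?thesis by (simp add: measurable_cong_sets[OF sets_PiM_equal_borel refl])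
qed

lemma cont_test_lin:
  assumes A: "finite A" and h: "\<And>k. k \<in> A \<Longrightarrow> cont_test J (h k)" and c: "c \<ge> 0"
  shows "cont_test J (\<lambda>y. a + c * (\<Sum>k\<in>A. h k y))"
  unfolding cont_test_def test_fun_def
proof (intro conjI allI impI)
  have hm: "\<And>k. k \<in> A \<Longrightarrow> h k \<in> borel_measurable (PiM J (\<lambda>_. borel))"
    using h unfolding cont_test_def test_fun_def by blast
  show "(\<lambda>y. a + c * (\<Sum>k\<in>A. h k y)) \<in> borel_measurable (PiM J (\<lambda>_. borel))"
    using hm by (intro borel_measurable_add borel_measurable_times borel_measurable_const borel_measurable_sum) auto
  have "\<forall>k\<in>A. \<exists>Ck. \<forall>x\<in>PiE J (\<lambda>_. UNIV). \<bar>h k x\<bar> \<le> Ck"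
    using h unfolding cont_test_def test_fun_def by blast
  then obtain Ck where Ck: "\<And>k x. k \<in> A \<Longrightarrow> x \<in> PiE J (\<lambda>_. UNIV) \<Longrightarrow> \<bar>h k x\<bar> \<le> Ck k"
    by metis
  show "\<exists>B. \<forall>x\<in>PiE J (\<lambda>_. UNIV). \<bar>a + c * (\<Sum>k\<in>A. h k x)\<bar> \<le> B"
  proof (intro exI ballI)
    fix x :: "_ \<Rightarrow> real" assume x: "x \<in> PiE J (\<lambda>_. UNIV)"
    have "\<bar>a + c * (\<Sum>k\<in>A. h k x)\<bar> \<le> \<bar>a\<bar> + c * \<bar>\<Sum>k\<in>A. h k x\<bar>"
      using abs_triangle_ineq[of a "c * (\<Sum>k\<in>A. h k x)"] c by (simp add: abs_mult)
    also have "\<bar>\<Sum>k\<in>A. h k x\<bar> \<le> (\<Sum>k\<in>A. Ck k)"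
      using sum_abs[of "\<lambda>k. h k x" A] sum_mono[of A "\<lambda>k. \<bar>h k x\<bar>" Ck, OF Ck[OF _ x]] by linarith
    then have "c * \<bar>\<Sum>k\<in>A. h k x\<bar> \<le> c * (\<Sum>k\<in>A. Ck k)" using c by (intro mult_left_mono)
    finally show "\<bar>a + c * (\<Sum>k\<in>A. h k x)\<bar> \<le> \<bar>a\<bar> + c * (\<Sum>k\<in>A. Ck k)" by simp
  qed
  show "coord_mono J (\<lambda>y. a + c * (\<Sum>k\<in>A. h k y))"
    unfolding coord_mono_def
  proof (intro ballI impI)
    fix x y :: "_ \<Rightarrow> real" assume xy: "x \<in> PiE J (\<lambda>_. UNIV)" "y \<in> PiE J (\<lambda>_. UNIV)" "\<forall>j\<in>J. x j \<le> y j"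
    have "(\<Sum>k\<in>A. h k x) \<le> (\<Sum>k\<in>A. h k y)"
      using h xy unfolding cont_test_def test_fun_def coord_mono_def by (intro sum_mono) blast
    then show "a + c * (\<Sum>k\<in>A. h k x) \<le> a + c * (\<Sum>k\<in>A. h k y)"
      using c by (simp add: mult_left_mono)
  qed
next
  fix xs :: "nat \<Rightarrow> _ \<Rightarrow> real" and x
  assume "\<forall>j\<in>J. (\<lambda>k. xs k j) \<longlonglongrightarrow> x j"
  then have "\<And>k. k \<in> A \<Longrightarrow> (\<lambda>t. h k (restrict (xs t) J)) \<longlonglongrightarrow> h k (restrict x J)"
    using h unfolding cont_test_def by blast
  then show "(\<lambda>t. a + c * (\<Sum>k\<in>A. h k (restrict (xs t) J))) \<longlonglongrightarrow> a + c * (\<Sum>k\<in>A. h k (restrict x J))"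
    by (intro tendsto_intros) auto
qed

lemma test_fun_borel: "test_fun J f \<Longrightarrow> (\<lambda>x::nat\<Rightarrow>real. f (restrict x J)) \<in> borel_measurable borel"
  unfolding test_fun_def by (intro measurable_compose[OF restrict_borel]) auto

lemma meas_mu: "sets \<mu> = sets borel \<Longrightarrow> g \<in> borel_measurable borel \<Longrightarrow> g \<in> borel_measurable \<mu>"
  using measurable_cong_sets[of \<mu> borel borel borel] by simp

lemma fun_approx:
  fixes \<mu> :: "(nat \<Rightarrow> real) measure"
  assumes prob: "prob_space \<mu>" and sets: "sets \<mu> = sets borel" and J: "finite J"
    and f: "test_fun J f" and fb: "\<And>x. \<bar>f (restrict x J)\<bar> \<le> C" and e: "\<epsilon> > 0"
  shows "\<exists>h. cont_test J h \<and> (\<forall>x. \<bar>h (restrict x J)\<bar> \<le> C) \<and>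
           integral\<^sup>L \<mu> (\<lambda>x. \<bar>f (restrict x J) - h (restrict x J)\<bar>) \<le> \<epsilon>"
proof -
  interpret prob_space \<mu> by fact
  have C0: "C \<ge> 0" using fb[of undefined] by linarith
  define N :: nat where "N = nat \<lceil>4*C/\<epsilon>\<rceil> + 1"
  define \<delta> where "\<delta> = 2*C/N"
  define \<eta> where "\<eta> = \<epsilon> / (2*(2*C+1))"
  have Npos: "N > 0" unfolding N_def by simp
  have d0: "\<delta> \<ge> 0" unfolding \<delta>_def using C0 by simp
  have eta0: "\<eta> > 0" unfolding \<eta>_def using C0 e by simp
  define F where "F x = f (restrict x J)" for x
  have Fb: "F \<in> borel_measurable borel" unfolding F_def by (rule test_fun_borel[OF f])
  define S where "S k = {x. -C + real k * \<delta> < F x}" for k :: nat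
  have Sb: "S k \<in> sets borel" for k
  proof -
    have "{x \<in> space borel. -C + real k * \<delta> < F x} \<in> sets borel" using Fb by measurable
    then show ?thesis unfolding S_def by simp
  qed
  have Fmono: "F x \<le> F y" if "\<And>j. j \<in> J \<Longrightarrow> x j \<le> y j" for x y
    using f that unfolding F_def test_fun_def coord_mono_def by auto
  have Sinc: "y \<in> S k" if "x \<in> S k" "\<And>j. j \<in> J \<Longrightarrow> x j \<le> y j" for x y k
    using that Fmono[of x y] unfolding S_def by auto
  have "\<forall>k. \<exists>h. cont_test J h \<and> (\<forall>x. 0 \<le> h (restrict x J) \<and> h (restrict x J) \<le> 1) \<and>
           integral\<^sup>L \<mu> (\<lambda>x. \<bar>indicator (S k) x - h (restrict x J)\<bar>) \<le> \<eta>"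
  proof (rule allI)
    fix k show "\<exists>h. cont_test J h \<and> (\<forall>x. 0 \<le> h (restrict x J) \<and> h (restrict x J) \<le> 1) \<and>
           integral\<^sup>L \<mu> (\<lambda>x. \<bar>indicator (S k) x - h (restrict x J)\<bar>) \<le> \<eta>"
      by (rule indicator_approx[OF prob sets J Sb _ eta0]) (erule Sinc, blast)
  qed
  then obtain hs where hs: "\<And>k. cont_test J (hs k)" "\<And>k x. 0 \<le> hs k (restrict x J)" "\<And>k x. hs k (restrict x J) \<le> 1"
    "\<And>k. integral\<^sup>L \<mu> (\<lambda>x. \<bar>indicator (S k) x - hs k (restrict x J)\<bar>) \<le> \<eta>"
    by metis
  define H where "H y = -C + \<delta> * (\<Sum>k\<in>{1..N}. hs k y)" for y
  have Hc: "cont_test J H" unfolding H_def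
    by (rule cont_test_lin) (use hs(1) d0 in auto)
  have hsm: "(\<lambda>x. hs k (restrict x J)) \<in> borel_measurable \<mu>" for k
    using meas_mu[OF sets test_fun_borel[OF cont_test_test[OF hs(1)]]] .
  have Fm: "F \<in> borel_measurable \<mu>" by (rule meas_mu[OF sets Fb])
  have Sm: "S k \<in> sets \<mu>" for k using Sb sets by simp
  have Hb: "\<bar>H (restrict x J)\<bar> \<le> C" for x
  proof -
    have s0: "0 \<le> (\<Sum>k\<in>{1..N}. hs k (restrict x J))" using hs(2) by (intro sum_nonneg) auto
    have s1: "(\<Sum>k\<in>{1..N}. hs k (restrict x J)) \<le> real N"
      using sum_mono[of "{1..N}" "\<lambda>k. hs k (restrict x J)" "\<lambda>_. 1"] hs(3) by simp
    have "\<delta> * real N = 2 * C" unfolding \<delta>_def using Npos by simp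
    moreover have "\<delta> * (\<Sum>k\<in>{1..N}. hs k (restrict x J)) \<le> \<delta> * real N" using s1 d0 by (rule mult_left_mono)
    moreover have "0 \<le> \<delta> * (\<Sum>k\<in>{1..N}. hs k (restrict x J))" using s0 d0 by simp
    ultimately show ?thesis unfolding H_def by linarith
  qed
  have ptw: "\<bar>F x - H (restrict x J)\<bar> \<le> \<delta> + \<delta> * (\<Sum>k\<in>{1..N}. \<bar>indicator (S k) x - hs k (restrict x J)\<bar>)" for x
  proof -
    define FN where "FN = -C + \<delta> * (\<Sum>k\<in>{1..N}. indicator (S k) x :: real)"
    have "FN = -C + \<delta> * (\<Sum>k\<in>{1..N}. if -C + real k * \<delta> < F x then 1 else 0)"
      unfolding FN_def S_def by (intro arg_cong[where f="\<lambda>s. -C + \<delta> * s"] sum.cong refl) (simp add: indicator_def)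
    then have 1: "\<bar>F x - FN\<bar> \<le> \<delta>"
      using count_approx[OF Npos, of C "F x" \<delta>] fb[of x] unfolding F_def \<delta>_def by simp
    have "FN - H (restrict x J) = \<delta> * (\<Sum>k\<in>{1..N}. indicator (S k) x - hs k (restrict x J))"
      unfolding FN_def H_def by (simp add: sum_subtractf algebra_simps)
    then have "\<bar>FN - H (restrict x J)\<bar> \<le> \<delta> * (\<Sum>k\<in>{1..N}. \<bar>indicator (S k) x - hs k (restrict x J)\<bar>)"
      using d0 by (simp add: abs_mult mult_left_mono sum_abs)
    with 1 show ?thesis by linarith
  qed
  have intk: "integrable \<mu> (\<lambda>x. \<bar>indicator (S k) x - hs k (restrict x J)\<bar>)" for k
  proof (rule integrable_const_bound[where B=2])
    show "AE x in \<mu>. norm \<bar>indicator (S k) x - hs k (restrict x J)\<bar> \<le> (2::real)"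
    proof (intro AE_I2)
      fix x
      have "0 \<le> hs k (restrict x J)" "hs k (restrict x J) \<le> 1" using hs by auto
      then show "norm \<bar>indicator (S k) x - hs k (restrict x J)\<bar> \<le> (2::real)" by (cases "x \<in> S k") auto
    qed
    show "(\<lambda>x. \<bar>indicator (S k) x - hs k (restrict x J)\<bar>) \<in> borel_measurable \<mu>"
      using hsm Sm by (intro borel_measurable_abs borel_measurable_diff borel_measurable_indicator) auto
  qed
  have Hm: "(\<lambda>x. H (restrict x J)) \<in> borel_measurable \<mu>"
    using meas_mu[OF sets test_fun_borel[OF cont_test_test[OF Hc]]] .
  have int0: "integrable \<mu> (\<lambda>x. \<bar>F x - H (restrict x J)\<bar>)"
  proof (rule integrable_const_bound[where B="2*C"])
    show "AE x in \<mu>. norm \<bar>F x - H (restrict x J)\<bar> \<le> 2*C"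
      using fb Hb unfolding F_def by (intro AE_I2) (smt (verit) real_norm_def)
  qed (use Fm Hm in auto)
  have "integral\<^sup>L \<mu> (\<lambda>x. \<bar>F x - H (restrict x J)\<bar>)
      \<le> integral\<^sup>L \<mu> (\<lambda>x. \<delta> + \<delta> * (\<Sum>k\<in>{1..N}. \<bar>indicator (S k) x - hs k (restrict x J)\<bar>))"
    by (intro integral_mono int0 ptw Bochner_Integration.integrable_add integrable_mult_right
        Bochner_Integration.integrable_sum intk) simp
  also have "\<dots> = \<delta> + \<delta> * (\<Sum>k\<in>{1..N}. integral\<^sup>L \<mu> (\<lambda>x. \<bar>indicator (S k) x - hs k (restrict x J)\<bar>))"
    using intk prob_space by (simp add: Bochner_Integration.integral_add integrable_mult_right Bochner_Integration.integrable_sum)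
  also have "\<dots> \<le> \<delta> + \<delta> * (\<Sum>k\<in>{1..N}. \<eta>)"
    using hs(4) d0 by (intro add_left_mono mult_left_mono sum_mono) auto
  also have "\<dots> = \<delta> + 2 * C * \<eta>" unfolding \<delta>_def using Npos by simp
  also have "\<dots> \<le> \<epsilon>"
  proof -
    have "\<delta> \<le> \<epsilon> / 2"
    proof (cases "C = 0")
      case True then show ?thesis unfolding \<delta>_def using e by simp
    next
      case False
      then have Cp: "C > 0" using C0 by simp
      have "4*C/\<epsilon> \<le> real (nat \<lceil>4*C/\<epsilon>\<rceil>)" by linarith
      then have "4*C/\<epsilon> < real N" unfolding N_def by simp
      then have "4*C < \<epsilon> * real N" using e by (simp add: field_simps)
      then show ?thesis unfolding \<delta>_def using Npos by (simp add: field_simps)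
    qed
    moreover have "2 * C * \<eta> \<le> \<epsilon> / 2"
      unfolding \<eta>_def using C0 e by (simp add: field_simps)
    ultimately show ?thesis by linarith
  qed
  finally show ?thesis using Hc Hb unfolding F_def by blast
qed

lemma approx_ineq:
  fixes s a a' b b' c c' e1 e2 :: real
  assumes "\<bar>a - a'\<bar> \<le> e1" "\<bar>b*c - b'*c'\<bar> \<le> e2" "s*a' \<le> s*(b'*c')"
  shows "s*a \<le> s*(b*c) + \<bar>s\<bar>*(e1+e2)"
proof -
  have "s*a - s*a' \<le> \<bar>s\<bar>*e1"
    using assms(1) by (metis abs_ge_self abs_mult order.trans mult_left_mono abs_ge_zero right_diff_distrib)
  moreover have "s*(b'*c') - s*(b*c) \<le> \<bar>s\<bar>*e2"
    using assms(2) by (metis abs_ge_self abs_minus_commute abs_mult order.trans mult_left_mono abs_ge_zero right_diff_distrib)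
  ultimately show ?thesis using assms(3) by (simp add: algebra_simps)
qed

lemma cov_ok_cont_imp_test:
  fixes Y :: "nat \<Rightarrow> 'w \<Rightarrow> real"
  assumes P: "prob_space P" and J1: "finite J1" and J2: "finite J2"
    and Ym: "\<And>i. i \<in> J1 \<union> J2 \<Longrightarrow> Y i \<in> borel_measurable P"
    and ok: "cov_ok P Y J1 J2 s cont_test"
  shows "cov_ok P Y J1 J2 s test_fun"
  unfolding cov_ok_def
proof (intro allI impI)
  interpret prob_space P by fact
  fix f g assume f: "test_fun J1 f" and g: "test_fun J2 g"
  define X where "X \<omega> = (\<lambda>i. if i \<in> J1 \<union> J2 then Y i \<omega> else 0)" for \<omega>
  have Xm0: "(\<lambda>\<omega>. \<lambda>i\<in>UNIV. if i \<in> J1 \<union> J2 then Y i \<omega> else 0) \<in> measurable P (PiM UNIV (\<lambda>_. borel))"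
  proof (intro measurable_restrict)
    fix i show "(\<lambda>\<omega>. if i \<in> J1 \<union> J2 then Y i \<omega> else 0) \<in> borel_measurable P"
      using Ym by (cases "i \<in> J1 \<union> J2") auto
  qed
  have Xm: "X \<in> measurable P borel"
    using Xm0 unfolding X_def by (simp add: measurable_cong_sets[OF refl sets_PiM_equal_borel] restrict_UNIV)
  define \<mu> where "\<mu> = distr P borel X"
  have prob: "prob_space \<mu>" unfolding \<mu>_def by (rule prob_space_distr[OF Xm])
  have sets: "sets \<mu> = sets borel" unfolding \<mu>_def by simp
  have muf: "finite_measure \<mu>" using prob by (simp add: prob_space_def)
  have tr: "integral\<^sup>L P (\<lambda>\<omega>. \<phi> (X \<omega>)) = integral\<^sup>L \<mu> \<phi>" if "\<phi> \<in> borel_measurable borel" for \<phi> :: "_ \<Rightarrow> real"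
    unfolding \<mu>_def using integral_distr[OF Xm that] by simp
  have r1: "restrict (\<lambda>i. Y i \<omega>) J1 = restrict (X \<omega>) J1" for \<omega> unfolding X_def by auto
  have r2: "restrict (\<lambda>i. Y i \<omega>) J2 = restrict (X \<omega>) J2" for \<omega> unfolding X_def by auto
  obtain Cf where Cf: "\<And>x. \<bar>f (restrict x J1)\<bar> \<le> Cf" "Cf \<ge> 0" using test_fun_bound[OF f] by blast
  obtain Cg where Cg: "\<And>x. \<bar>g (restrict x J2)\<bar> \<le> Cg" "Cg \<ge> 0" using test_fun_bound[OF g] by blast
  define F where "F x = f (restrict x J1)" for x
  define G where "G x = g (restrict x J2)" for x
  have Fb: "F \<in> borel_measurable borel" unfolding F_def by (rule test_fun_borel[OF f])
  have Gb: "G \<in> borel_measurable borel" unfolding G_def by (rule test_fun_borel[OF g])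
  have main: "s * integral\<^sup>L \<mu> (\<lambda>x. F x * G x) \<le> s * (integral\<^sup>L \<mu> F * integral\<^sup>L \<mu> G)"
  proof (rule field_le_epsilon)
    fix \<epsilon> :: real assume e: "\<epsilon> > 0"
    define \<eta> where "\<eta> = \<epsilon> / (2 * (\<bar>s\<bar> + 1) * (Cf + Cg + 1))"
    have eta: "\<eta> > 0" unfolding \<eta>_def using e Cf Cg by (simp add: field_simps add_pos_nonneg)
    obtain h where h: "cont_test J1 h" "\<And>x. \<bar>h (restrict x J1)\<bar> \<le> Cf"
      "integral\<^sup>L \<mu> (\<lambda>x. \<bar>f (restrict x J1) - h (restrict x J1)\<bar>) \<le> \<eta>"
      using fun_approx[OF prob sets J1 f Cf(1) eta] by blast
    obtain l where l: "cont_test J2 l" "\<And>x. \<bar>l (restrict x J2)\<bar> \<le> Cg"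
      "integral\<^sup>L \<mu> (\<lambda>x. \<bar>g (restrict x J2) - l (restrict x J2)\<bar>) \<le> \<eta>"
      using fun_approx[OF prob sets J2 g Cg(1) eta] by blast
    define H where "H x = h (restrict x J1)" for x
    define L where "L x = l (restrict x J2)" for x
    have Hb: "H \<in> borel_measurable borel" unfolding H_def by (rule test_fun_borel[OF cont_test_test[OF h(1)]])
    have Lb: "L \<in> borel_measurable borel" unfolding L_def by (rule test_fun_borel[OF cont_test_test[OF l(1)]])
    have Fm: "F \<in> borel_measurable \<mu>" "G \<in> borel_measurable \<mu>" "H \<in> borel_measurable \<mu>" "L \<in> borel_measurable \<mu>"
      using meas_mu[OF sets] Fb Gb Hb Lb by auto
    have iF: "integrable \<mu> F" using Fm Cf unfolding F_def by (intro finite_measure.integrable_const_bound[OF muf, where B=Cf] AE_I2) auto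
    have iG: "integrable \<mu> G" using Fm Cg unfolding G_def by (intro finite_measure.integrable_const_bound[OF muf, where B=Cg] AE_I2) auto
    have iH: "integrable \<mu> H" using Fm h(2) unfolding H_def by (intro finite_measure.integrable_const_bound[OF muf, where B=Cf] AE_I2) auto
    have iL: "integrable \<mu> L" using Fm l(2) unfolding L_def by (intro finite_measure.integrable_const_bound[OF muf, where B=Cg] AE_I2) auto
    have iFG: "integrable \<mu> (\<lambda>x. F x * G x)" using Fm Cf Cg unfolding F_def G_def
      by (intro finite_measure.integrable_const_bound[OF muf, where B="Cf*Cg"] AE_I2) (auto simp: abs_mult intro!: mult_mono)
    have iHL: "integrable \<mu> (\<lambda>x. H x * L x)" using Fm h(2) l(2) Cf Cg unfolding H_def L_def
      by (intro finite_measure.integrable_const_bound[OF muf, where B="Cf*Cg"] AE_I2) (auto simp: abs_mult intro!: mult_mono)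
    have dF: "integral\<^sup>L \<mu> (\<lambda>x. \<bar>F x - H x\<bar>) \<le> \<eta>" using h(3) unfolding F_def H_def .
    have dG: "integral\<^sup>L \<mu> (\<lambda>x. \<bar>G x - L x\<bar>) \<le> \<eta>" using l(3) unfolding G_def L_def .
    have idF: "integrable \<mu> (\<lambda>x. \<bar>F x - H x\<bar>)" using iF iH by auto
    have idG: "integrable \<mu> (\<lambda>x. \<bar>G x - L x\<bar>)" using iG iL by auto
    have e1: "\<bar>integral\<^sup>L \<mu> (\<lambda>x. F x * G x) - integral\<^sup>L \<mu> (\<lambda>x. H x * L x)\<bar> \<le> (Cf + Cg) * \<eta>"
    proof -
      have "\<bar>integral\<^sup>L \<mu> (\<lambda>x. F x * G x) - integral\<^sup>L \<mu> (\<lambda>x. H x * L x)\<bar>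
          = \<bar>integral\<^sup>L \<mu> (\<lambda>x. F x * G x - H x * L x)\<bar>" using iFG iHL by simp
      also have "\<dots> \<le> integral\<^sup>L \<mu> (\<lambda>x. \<bar>F x * G x - H x * L x\<bar>)" by (rule integral_abs_bound)
      also have "\<dots> \<le> integral\<^sup>L \<mu> (\<lambda>x. Cf * \<bar>G x - L x\<bar> + Cg * \<bar>F x - H x\<bar>)"
      proof (rule integral_mono)
        show "integrable \<mu> (\<lambda>x. \<bar>F x * G x - H x * L x\<bar>)" using iFG iHL by auto
        show "integrable \<mu> (\<lambda>x. Cf * \<bar>G x - L x\<bar> + Cg * \<bar>F x - H x\<bar>)" using idF idG by auto
        fix x
        have "F x * G x - H x * L x = F x * (G x - L x) + L x * (F x - H x)" by (simp add: algebra_simps)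
        then have "\<bar>F x * G x - H x * L x\<bar> \<le> \<bar>F x\<bar> * \<bar>G x - L x\<bar> + \<bar>L x\<bar> * \<bar>F x - H x\<bar>"
          by (simp add: abs_mult[symmetric] abs_triangle_ineq)
        also have "\<dots> \<le> Cf * \<bar>G x - L x\<bar> + Cg * \<bar>F x - H x\<bar>"
          using Cf(1)[of x] l(2)[of x] unfolding F_def L_def by (intro add_mono mult_right_mono) auto
        finally show "\<bar>F x * G x - H x * L x\<bar> \<le> Cf * \<bar>G x - L x\<bar> + Cg * \<bar>F x - H x\<bar>" .
      qed
      also have "\<dots> = Cf * integral\<^sup>L \<mu> (\<lambda>x. \<bar>G x - L x\<bar>) + Cg * integral\<^sup>L \<mu> (\<lambda>x. \<bar>F x - H x\<bar>)"
        using idF idG by simp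
      also have "\<dots> \<le> Cf * \<eta> + Cg * \<eta>"
        using dF dG Cf(2) Cg(2) by (intro add_mono mult_left_mono) auto
      finally show ?thesis by (simp add: algebra_simps)
    qed
    have bF: "\<bar>integral\<^sup>L \<mu> F - integral\<^sup>L \<mu> H\<bar> \<le> \<eta>"
    proof -
      have "\<bar>integral\<^sup>L \<mu> F - integral\<^sup>L \<mu> H\<bar> = \<bar>integral\<^sup>L \<mu> (\<lambda>x. F x - H x)\<bar>" using iF iH by simp
      also have "\<dots> \<le> integral\<^sup>L \<mu> (\<lambda>x. \<bar>F x - H x\<bar>)" by (rule integral_abs_bound)
      finally show ?thesis using dF by linarith
    qed
    have bG: "\<bar>integral\<^sup>L \<mu> G - integral\<^sup>L \<mu> L\<bar> \<le> \<eta>"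
    proof -
      have "\<bar>integral\<^sup>L \<mu> G - integral\<^sup>L \<mu> L\<bar> = \<bar>integral\<^sup>L \<mu> (\<lambda>x. G x - L x)\<bar>" using iG iL by simp
      also have "\<dots> \<le> integral\<^sup>L \<mu> (\<lambda>x. \<bar>G x - L x\<bar>)" by (rule integral_abs_bound)
      finally show ?thesis using dG by linarith
    qed
    have absF: "\<bar>integral\<^sup>L \<mu> F\<bar> \<le> Cf"
    proof -
      have "\<bar>integral\<^sup>L \<mu> F\<bar> \<le> integral\<^sup>L \<mu> (\<lambda>x. \<bar>F x\<bar>)" by (rule integral_abs_bound)
      also have "\<dots> \<le> integral\<^sup>L \<mu> (\<lambda>x. Cf)" using iF Cf finite_measure.integrable_const[OF muf] unfolding F_def by (intro integral_mono) auto
      finally show ?thesis using prob_space.prob_space[OF prob] by simp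
    qed
    have absL: "\<bar>integral\<^sup>L \<mu> L\<bar> \<le> Cg"
    proof -
      have "\<bar>integral\<^sup>L \<mu> L\<bar> \<le> integral\<^sup>L \<mu> (\<lambda>x. \<bar>L x\<bar>)" by (rule integral_abs_bound)
      also have "\<dots> \<le> integral\<^sup>L \<mu> (\<lambda>x. Cg)" using iL l(2) finite_measure.integrable_const[OF muf] unfolding L_def by (intro integral_mono) auto
      finally show ?thesis using prob_space.prob_space[OF prob] by simp
    qed
    have e2: "\<bar>integral\<^sup>L \<mu> F * integral\<^sup>L \<mu> G - integral\<^sup>L \<mu> H * integral\<^sup>L \<mu> L\<bar> \<le> (Cf + Cg) * \<eta>"
    proof -
      have "integral\<^sup>L \<mu> F * integral\<^sup>L \<mu> G - integral\<^sup>L \<mu> H * integral\<^sup>L \<mu> L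
          = integral\<^sup>L \<mu> F * (integral\<^sup>L \<mu> G - integral\<^sup>L \<mu> L) + integral\<^sup>L \<mu> L * (integral\<^sup>L \<mu> F - integral\<^sup>L \<mu> H)"
        by (simp add: algebra_simps)
      then have "\<bar>integral\<^sup>L \<mu> F * integral\<^sup>L \<mu> G - integral\<^sup>L \<mu> H * integral\<^sup>L \<mu> L\<bar>
          \<le> \<bar>integral\<^sup>L \<mu> F\<bar> * \<bar>integral\<^sup>L \<mu> G - integral\<^sup>L \<mu> L\<bar> + \<bar>integral\<^sup>L \<mu> L\<bar> * \<bar>integral\<^sup>L \<mu> F - integral\<^sup>L \<mu> H\<bar>"
        by (simp add: abs_mult[symmetric] abs_triangle_ineq)
      also have "\<dots> \<le> Cf * \<eta> + Cg * \<eta>"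
        using absF absL bF bG by (intro add_mono mult_mono) auto
      finally show ?thesis by (simp add: algebra_simps)
    qed
    have okHL: "s * integral\<^sup>L \<mu> (\<lambda>x. H x * L x) \<le> s * (integral\<^sup>L \<mu> H * integral\<^sup>L \<mu> L)"
    proof -
      have "s * integral\<^sup>L P (\<lambda>\<omega>. h (restrict (\<lambda>i. Y i \<omega>) J1) * l (restrict (\<lambda>i. Y i \<omega>) J2))
         \<le> s * (integral\<^sup>L P (\<lambda>\<omega>. h (restrict (\<lambda>i. Y i \<omega>) J1)) * integral\<^sup>L P (\<lambda>\<omega>. l (restrict (\<lambda>i. Y i \<omega>) J2)))"
        using ok h(1) l(1) unfolding cov_ok_def by blast
      moreover have "integral\<^sup>L P (\<lambda>\<omega>. h (restrict (\<lambda>i. Y i \<omega>) J1) * l (restrict (\<lambda>i. Y i \<omega>) J2)) = integral\<^sup>L \<mu> (\<lambda>x. H x * L x)"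
        using tr[of "\<lambda>x. H x * L x"] Hb Lb unfolding H_def L_def r1 r2 by simp
      moreover have "integral\<^sup>L P (\<lambda>\<omega>. h (restrict (\<lambda>i. Y i \<omega>) J1)) = integral\<^sup>L \<mu> H"
        using tr[of H] Hb unfolding H_def r1 by simp
      moreover have "integral\<^sup>L P (\<lambda>\<omega>. l (restrict (\<lambda>i. Y i \<omega>) J2)) = integral\<^sup>L \<mu> L"
        using tr[of L] Lb unfolding L_def r2 by simp
      ultimately show ?thesis by simp
    qed
    have "s * integral\<^sup>L \<mu> (\<lambda>x. F x * G x) \<le> s * (integral\<^sup>L \<mu> F * integral\<^sup>L \<mu> G) + \<bar>s\<bar> * ((Cf + Cg) * \<eta> + (Cf + Cg) * \<eta>)"
      by (rule approx_ineq[OF e1 e2 okHL])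
    also have "\<bar>s\<bar> * ((Cf + Cg) * \<eta> + (Cf + Cg) * \<eta>) \<le> \<epsilon>"
    proof -
      have "\<bar>s\<bar> * ((Cf + Cg) * \<eta> + (Cf + Cg) * \<eta>) = 2 * \<bar>s\<bar> * (Cf + Cg) * \<eta>" by simp
      also have "\<dots> = \<epsilon> * (2 * \<bar>s\<bar> * (Cf + Cg)) / (2 * (\<bar>s\<bar> + 1) * (Cf + Cg + 1))"
        unfolding \<eta>_def by simp
      also have "\<dots> \<le> \<epsilon> * (2 * (\<bar>s\<bar> + 1) * (Cf + Cg + 1)) / (2 * (\<bar>s\<bar> + 1) * (Cf + Cg + 1))"
        using Cf(2) Cg(2) e by (intro divide_right_mono mult_left_mono mult_mono) auto
      also have "\<dots> = \<epsilon>" using Cf(2) Cg(2) by (simp add: add_pos_nonneg)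
      finally show ?thesis by simp
    qed
    finally show "s * integral\<^sup>L \<mu> (\<lambda>x. F x * G x) \<le> s * (integral\<^sup>L \<mu> F * integral\<^sup>L \<mu> G) + \<epsilon>" by simp
  qed
  have "integral\<^sup>L P (\<lambda>\<omega>. f (restrict (\<lambda>i. Y i \<omega>) J1) * g (restrict (\<lambda>i. Y i \<omega>) J2)) = integral\<^sup>L \<mu> (\<lambda>x. F x * G x)"
    using tr[of "\<lambda>x. F x * G x"] Fb Gb unfolding F_def G_def r1 r2 by simp
  moreover have "integral\<^sup>L P (\<lambda>\<omega>. f (restrict (\<lambda>i. Y i \<omega>) J1)) = integral\<^sup>L \<mu> F"
    using tr[of F] Fb unfolding F_def r1 by simp
  moreover have "integral\<^sup>L P (\<lambda>\<omega>. g (restrict (\<lambda>i. Y i \<omega>) J2)) = integral\<^sup>L \<mu> G"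
    using tr[of G] Gb unfolding G_def r2 by simp
  ultimately show "s * integral\<^sup>L P (\<lambda>\<omega>. f (restrict (\<lambda>i. Y i \<omega>) J1) * g (restrict (\<lambda>i. Y i \<omega>) J2))
     \<le> s * (integral\<^sup>L P (\<lambda>\<omega>. f (restrict (\<lambda>i. Y i \<omega>) J1)) * integral\<^sup>L P (\<lambda>\<omega>. g (restrict (\<lambda>i. Y i \<omega>) J2)))"
    using main by simp
qed

definition assoc_prop :: "'w measure \<Rightarrow> (nat \<Rightarrow> 'w \<Rightarrow> real) \<Rightarrow> nat
   \<Rightarrow> (nat set \<Rightarrow> ((nat\<Rightarrow>real)\<Rightarrow>real) \<Rightarrow> bool) \<Rightarrow> bool \<Rightarrow> bool" where
  "assoc_prop P Y n T b \<longleftrightarrow>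
    (\<forall>J\<subseteq>{..<n}. cov_ok P Y J (if b then {..<n} - J else J) (if b then 1 else -1) T)"

lemma neg_assoc_prop: "neg_assoc P Y {..<n} \<longleftrightarrow> assoc_prop P Y n test_fun True"
  unfolding assoc_prop_def neg_assoc_cov by simp

lemma pos_assoc_prop: "pos_assoc P Y {..<n} \<longleftrightarrow> assoc_prop P Y n test_fun False"
  unfolding assoc_prop_def pos_assoc_cov by simp

definition lift :: "(nat \<Rightarrow> nat) \<Rightarrow> nat \<Rightarrow> nat set \<Rightarrow> ((nat\<Rightarrow>real)\<Rightarrow>real) \<Rightarrow> (nat\<Rightarrow>real) \<Rightarrow> real" where
  "lift grp m K f = (\<lambda>z. f (\<lambda>i\<in>K. \<Sum>p\<in>{p. p < m \<and> grp p = i}. z p))"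

lemma lift_test:
  assumes f: "test_fun K f"
  shows "test_fun {p. p < m \<and> grp p \<in> K} (lift grp m K f)"
  unfolding test_fun_def
proof (intro conjI)
  let ?K' = "{p. p < m \<and> grp p \<in> K}"
  have inner: "(\<lambda>z::nat\<Rightarrow>real. \<lambda>i\<in>K. \<Sum>p\<in>{p. p < m \<and> grp p = i}. z p) \<in> measurable (PiM ?K' (\<lambda>_. borel)) (PiM K (\<lambda>_. borel))"
    apply (rule measurable_restrict)
    apply (rule borel_measurable_sum)
    apply (rule measurable_component_singleton)
    apply auto
    done
  show "lift grp m K f \<in> borel_measurable (PiM ?K' (\<lambda>_. borel))"
    unfolding lift_def using f unfolding test_fun_def by (intro measurable_compose[OF inner]) auto
  from f obtain C where C: "\<forall>x\<in>PiE K (\<lambda>_. UNIV). \<bar>f x\<bar> \<le> C" unfolding test_fun_def by blast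
  show "\<exists>C. \<forall>x\<in>PiE ?K' (\<lambda>_. UNIV). \<bar>lift grp m K f x\<bar> \<le> C"
    using C unfolding lift_def by (intro exI[of _ C]) auto
  show "coord_mono ?K' (lift grp m K f)"
    unfolding coord_mono_def lift_def
  proof (intro ballI impI)
    fix x y :: "nat \<Rightarrow> real" assume xy: "\<forall>j\<in>?K'. x j \<le> y j"
    have "(\<lambda>i\<in>K. \<Sum>p\<in>{p. p < m \<and> grp p = i}. x p) i \<le> (\<lambda>i\<in>K. \<Sum>p\<in>{p. p < m \<and> grp p = i}. y p) i"
      if "i \<in> K" for i
      using that xy by (auto intro!: sum_mono)
    then show "f (\<lambda>i\<in>K. \<Sum>p\<in>{p. p < m \<and> grp p = i}. x p) \<le> f (\<lambda>i\<in>K. \<Sum>p\<in>{p. p < m \<and> grp p = i}. y p)"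
      using f unfolding test_fun_def coord_mono_def by auto
  qed
qed

lemma lift_eval:
  fixes Z Y :: "nat \<Rightarrow> 'w \<Rightarrow> real" and grp :: "nat \<Rightarrow> nat"
  assumes "\<And>i. i \<in> K \<Longrightarrow> Y i \<omega> = (\<Sum>p\<in>{p. p < m \<and> grp p = i}. Z p \<omega>)"
  shows "lift grp m K f (restrict (\<lambda>p. Z p \<omega>) {p. p < m \<and> grp p \<in> K}) = f (restrict (\<lambda>i. Y i \<omega>) K)"
proof -
  have "(\<lambda>i\<in>K. \<Sum>p\<in>{p. p < m \<and> grp p = i}. restrict (\<lambda>p. Z p \<omega>) {p. p < m \<and> grp p \<in> K} p)
      = restrict (\<lambda>i. Y i \<omega>) K"
  proof (rule restrict_ext)
    fix i assume i: "i \<in> K"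
    have "(\<Sum>p\<in>{p. p < m \<and> grp p = i}. restrict (\<lambda>p. Z p \<omega>) {p. p < m \<and> grp p \<in> K} p)
        = (\<Sum>p\<in>{p. p < m \<and> grp p = i}. Z p \<omega>)"
      using i by (intro sum.cong) auto
    then show "(\<Sum>p\<in>{p. p < m \<and> grp p = i}. restrict (\<lambda>p. Z p \<omega>) {p. p < m \<and> grp p \<in> K} p) = Y i \<omega>"
      using assms[OF i] by simp
  qed
  then show ?thesis unfolding lift_def by simp
qed

lemma cov_ok_group:
  fixes Z Y :: "nat \<Rightarrow> 'w \<Rightarrow> real" and grp :: "nat \<Rightarrow> nat"
  assumes eq: "\<And>\<omega> i. \<omega> \<in> space P \<Longrightarrow> i \<in> K1 \<union> K2 \<Longrightarrow> Y i \<omega> = (\<Sum>p\<in>{p. p < m \<and> grp p = i}. Z p \<omega>)"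
    and ok: "cov_ok P Z {p. p < m \<and> grp p \<in> K1} {p. p < m \<and> grp p \<in> K2} s test_fun"
  shows "cov_ok P Y K1 K2 s test_fun"
  unfolding cov_ok_def
proof (intro allI impI)
  fix f g assume f: "test_fun K1 f" and g: "test_fun K2 g"
  have e1: "lift grp m K1 f (restrict (\<lambda>p. Z p \<omega>) {p. p < m \<and> grp p \<in> K1}) = f (restrict (\<lambda>i. Y i \<omega>) K1)"
    if "\<omega> \<in> space P" for \<omega> using eq[OF that] by (intro lift_eval) auto
  have e2: "lift grp m K2 g (restrict (\<lambda>p. Z p \<omega>) {p. p < m \<and> grp p \<in> K2}) = g (restrict (\<lambda>i. Y i \<omega>) K2)"
    if "\<omega> \<in> space P" for \<omega> using eq[OF that] by (intro lift_eval) auto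
  have "s * integral\<^sup>L P (\<lambda>\<omega>. lift grp m K1 f (restrict (\<lambda>p. Z p \<omega>) {p. p < m \<and> grp p \<in> K1}) *
                              lift grp m K2 g (restrict (\<lambda>p. Z p \<omega>) {p. p < m \<and> grp p \<in> K2}))
     \<le> s * (integral\<^sup>L P (\<lambda>\<omega>. lift grp m K1 f (restrict (\<lambda>p. Z p \<omega>) {p. p < m \<and> grp p \<in> K1})) *
            integral\<^sup>L P (\<lambda>\<omega>. lift grp m K2 g (restrict (\<lambda>p. Z p \<omega>) {p. p < m \<and> grp p \<in> K2})))"
    using ok lift_test[OF f] lift_test[OF g] unfolding cov_ok_def by blast
  moreover have "integral\<^sup>L P (\<lambda>\<omega>. lift grp m K1 f (restrict (\<lambda>p. Z p \<omega>) {p. p < m \<and> grp p \<in> K1}) *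
                              lift grp m K2 g (restrict (\<lambda>p. Z p \<omega>) {p. p < m \<and> grp p \<in> K2}))
      = integral\<^sup>L P (\<lambda>\<omega>. f (restrict (\<lambda>i. Y i \<omega>) K1) * g (restrict (\<lambda>i. Y i \<omega>) K2))"
    using e1 e2 by (intro Bochner_Integration.integral_cong) auto
  moreover have "integral\<^sup>L P (\<lambda>\<omega>. lift grp m K1 f (restrict (\<lambda>p. Z p \<omega>) {p. p < m \<and> grp p \<in> K1}))
      = integral\<^sup>L P (\<lambda>\<omega>. f (restrict (\<lambda>i. Y i \<omega>) K1))"
    using e1 by (intro Bochner_Integration.integral_cong) auto
  moreover have "integral\<^sup>L P (\<lambda>\<omega>. lift grp m K2 g (restrict (\<lambda>p. Z p \<omega>) {p. p < m \<and> grp p \<in> K2}))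
      = integral\<^sup>L P (\<lambda>\<omega>. g (restrict (\<lambda>i. Y i \<omega>) K2))"
    using e2 by (intro Bochner_Integration.integral_cong) auto
  ultimately show "s * integral\<^sup>L P (\<lambda>\<omega>. f (restrict (\<lambda>i. Y i \<omega>) K1) * g (restrict (\<lambda>i. Y i \<omega>) K2))
     \<le> s * (integral\<^sup>L P (\<lambda>\<omega>. f (restrict (\<lambda>i. Y i \<omega>) K1)) * integral\<^sup>L P (\<lambda>\<omega>. g (restrict (\<lambda>i. Y i \<omega>) K2)))"
    by simp
qed

lemma assoc_group:
  fixes Z Y :: "nat \<Rightarrow> 'w \<Rightarrow> real" and grp :: "nat \<Rightarrow> nat"
  assumes grp: "\<And>p. p < m \<Longrightarrow> grp p < n"
    and eq: "\<And>\<omega> i. \<omega> \<in> space P \<Longrightarrow> i < n \<Longrightarrow> Y i \<omega> = (\<Sum>p\<in>{p. p < m \<and> grp p = i}. Z p \<omega>)"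
    and ok: "assoc_prop P Z m test_fun b"
  shows "assoc_prop P Y n test_fun b"
  unfolding assoc_prop_def
proof (intro allI impI)
  fix J assume J: "J \<subseteq> {..<n}"
  let ?K2 = "if b then {..<n} - J else J"
  let ?J' = "{p. p < m \<and> grp p \<in> J}"
  have J': "?J' \<subseteq> {..<m}" by auto
  have K2': "{p. p < m \<and> grp p \<in> ?K2} = (if b then {..<m} - ?J' else ?J')"
    using grp by auto
  have "cov_ok P Z ?J' (if b then {..<m} - ?J' else ?J') (if b then 1 else -1) test_fun"
    using ok J' unfolding assoc_prop_def by blast
  then have "cov_ok P Z ?J' {p. p < m \<and> grp p \<in> ?K2} (if b then 1 else -1) test_fun"
    by (simp only: K2')
  then show "cov_ok P Y J ?K2 (if b then 1 else -1) test_fun"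
    by (rule cov_ok_group[rotated]) (use eq J in \<open>auto split: if_splits\<close>)
qed

lemma rm_meas:
  assumes "random_measure P M" "B \<in> sets borel"
  shows "(\<lambda>\<omega>. measure (M \<omega>) B) \<in> borel_measurable P"
proof -
  have "(\<lambda>\<omega>. emeasure (M \<omega>) B) \<in> borel_measurable P" using assms unfolding random_measure_def by blast
  then show ?thesis unfolding measure_def by measurable
qed

lemma rm_fin:
  assumes "random_measure P M" "\<omega> \<in> space P" "B \<in> sets borel" "bounded B"
  shows "emeasure (M \<omega>) B \<noteq> \<infinity>"
  using assms unfolding random_measure_def by (metis less_irrefl)

lemma rm_sets:
  assumes "random_measure P M" "\<omega> \<in> space P"
  shows "sets (M \<omega>) = sets borel"
  using assms unfolding random_measure_def by blast

lemma ring_props: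
  fixes \<I> :: "'a::metric_space set set"
  assumes semi: "semiring_of_sets UNIV \<I>" and Ib: "\<I> \<subseteq> sets borel" and Ibd: "\<forall>B\<in>\<I>. bounded B" and A: "A \<in> semiring_of_sets.generated_ring \<I>"
  shows "A \<in> sets borel" "bounded A"
proof -
  interpret semiring_of_sets UNIV \<I> by fact
  from A obtain C where C: "finite C" "disjoint C" "C \<subseteq> \<I>" "A = \<Union>C" by (rule generated_ringE)
  show "A \<in> sets borel" using C Ib by (auto intro!: sets.finite_Union)
  show "bounded A" using C Ibd by (auto intro!: bounded_Union)
qed

lemma ring_case:
  fixes P :: "'w measure" and M :: "'w \<Rightarrow> 'a::metric_space measure" and \<I> :: "'a set set"
  assumes rm: "random_measure P M" and semi: "semiring_of_sets UNIV \<I>"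
    and Ib: "\<I> \<subseteq> sets borel" and Ibd: "\<forall>B\<in>\<I>. bounded B"
    and HI: "\<And>n B. n \<ge> 1 \<Longrightarrow> (\<forall>i<n. B i \<in> \<I>) \<Longrightarrow> disjoint_family_on B {..<n} \<Longrightarrow>
              assoc_prop P (\<lambda>i \<omega>. measure (M \<omega>) (B i)) n test_fun b"
    and n: "n \<ge> 1" and D: "\<And>i. i < n \<Longrightarrow> D i \<in> semiring_of_sets.generated_ring \<I>"
    and disj: "disjoint_family_on D {..<n}"
  shows "assoc_prop P (\<lambda>i \<omega>. measure (M \<omega>) (D i)) n test_fun b"
proof -
  interpret semiring_of_sets UNIV \<I> by fact
  have "\<forall>i\<in>{..<n}. \<exists>C. finite C \<and> disjoint C \<and> C \<subseteq> \<I> \<and> D i = \<Union>C"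
  proof
    fix i assume "i \<in> {..<n}"
    then have "D i \<in> generated_ring" using D by auto
    then obtain C where "finite C" "disjoint C" "C \<subseteq> \<I>" "D i = \<Union>C" by (rule generated_ringE)
    then show "\<exists>C. finite C \<and> disjoint C \<and> C \<subseteq> \<I> \<and> D i = \<Union>C" by blast
  qed
  then obtain C where C: "\<And>i. i < n \<Longrightarrow> finite (C i)" "\<And>i. i < n \<Longrightarrow> disjoint (C i)"
     "\<And>i. i < n \<Longrightarrow> C i \<subseteq> \<I>" "\<And>i. i < n \<Longrightarrow> D i = \<Union>(C i)"
    by (metis lessThan_iff bchoice)
  define C' where "C' i = insert {} (C i)" for i
  have C': "\<And>i. i < n \<Longrightarrow> finite (C' i)" "\<And>i. i < n \<Longrightarrow> disjoint (C' i)"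
     "\<And>i. i < n \<Longrightarrow> C' i \<subseteq> \<I>" "\<And>i. i < n \<Longrightarrow> D i = \<Union>(C' i)"
    using C empty_sets unfolding C'_def by (auto simp: disjoint_def)
  define Sg where "Sg = Sigma {..<n} C'"
  have fin: "finite Sg" unfolding Sg_def using C' by auto
  define m where "m = card Sg"
  obtain h where h: "bij_betw h {0..<m} Sg" using ex_bij_betw_nat_finite[OF fin] unfolding m_def by blast
  have h': "bij_betw h {..<m} Sg" using h by (simp add: atLeast0LessThan)
  have "(0, {}) \<in> Sg" unfolding Sg_def C'_def using n by auto
  then have m1: "m \<ge> 1" unfolding m_def using fin by (metis One_nat_def Suc_leI card_gt_0_iff empty_iff)
  define Bp where "Bp p = snd (h p)" for p
  define grp where "grp p = fst (h p)" for p
  have hS: "h p \<in> Sg" if "p < m" for p using h' that by (auto simp: bij_betw_def)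
  have grp_lt: "grp p < n" if "p < m" for p using hS[OF that] unfolding grp_def Sg_def by auto
  have Bp_in: "Bp p \<in> C' (grp p)" if "p < m" for p using hS[OF that] unfolding Bp_def grp_def Sg_def by auto
  have BpI: "Bp p \<in> \<I>" if "p < m" for p using Bp_in[OF that] C'(3)[OF grp_lt[OF that]] by auto
  have BpD: "Bp p \<subseteq> D (grp p)" if "p < m" for p using Bp_in[OF that] C'(4)[OF grp_lt[OF that]] by auto
  have disjB: "disjoint_family_on Bp {..<m}"
    unfolding disjoint_family_on_def
  proof (intro ballI impI)
    fix p q assume pq: "p \<in> {..<m}" "q \<in> {..<m}" "p \<noteq> q"
    then have hpq: "h p \<noteq> h q" using h' by (auto simp: bij_betw_def inj_on_def)
    show "Bp p \<inter> Bp q = {}"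
    proof (cases "grp p = grp q")
      case True
      then have "Bp p \<noteq> Bp q" using hpq unfolding Bp_def grp_def by (simp add: prod_eq_iff)
      moreover have "Bp p \<in> C' (grp p)" "Bp q \<in> C' (grp p)" using Bp_in[of p] Bp_in[of q] pq True by auto
      moreover have "disjoint (C' (grp p))" using C'(2) grp_lt pq by auto
      ultimately show ?thesis unfolding disjoint_def by blast
    next
      case False
      then have "D (grp p) \<inter> D (grp q) = {}" using disj grp_lt pq unfolding disjoint_family_on_def by auto
      then show ?thesis using BpD pq by auto
    qed
  qed
  have HZ: "assoc_prop P (\<lambda>p \<omega>. measure (M \<omega>) (Bp p)) m test_fun b"
    by (rule HI[OF m1]) (use BpI disjB in auto)
  show ?thesis
  proof (rule assoc_group[OF grp_lt _ HZ])
    fix \<omega> i assume \<omega>: "\<omega> \<in> space P" and i: "i < n"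
    have sM: "sets (M \<omega>) = sets borel" by (rule rm_sets[OF rm \<omega>])
    have "measure (M \<omega>) (D i) = measure (M \<omega>) (\<Union>c\<in>C' i. c)" using C'(4)[OF i] by simp
    also have "\<dots> = (\<Sum>c\<in>C' i. measure (M \<omega>) c)"
    proof (rule measure_finite_Union)
      show "finite (C' i)" by (rule C'(1)[OF i])
      show "(\<lambda>c. c) ` C' i \<subseteq> sets (M \<omega>)" using C'(3)[OF i] Ib sM by auto
      show "disjoint_family_on (\<lambda>c. c) (C' i)" using C'(2)[OF i] by (auto simp: disjoint_def disjoint_family_on_def)
      fix c assume "c \<in> C' i"
      then show "emeasure (M \<omega>) c \<noteq> \<infinity>" using C'(3)[OF i] Ib Ibd rm_fin[OF rm \<omega>] by auto
    qed
    also have "\<dots> = (\<Sum>x\<in>{i} \<times> C' i. measure (M \<omega>) (snd x))"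
    proof -
      have e: "{i} \<times> C' i = (\<lambda>c. (i, c)) ` C' i" by auto
      have "inj_on (\<lambda>c. (i, c)) (C' i)" by (auto simp: inj_on_def)
      then show ?thesis unfolding e by (simp add: sum.reindex)
    qed
    also have "\<dots> = (\<Sum>p\<in>{p. p < m \<and> grp p = i}. measure (M \<omega>) (Bp p))"
    proof -
      have "bij_betw h {p. p < m \<and> grp p = i} ({i} \<times> C' i)"
        unfolding bij_betw_def
      proof
        show "inj_on h {p. p < m \<and> grp p = i}"
          using h' by (auto simp: bij_betw_def inj_on_def)
        show "h ` {p. p < m \<and> grp p = i} = {i} \<times> C' i"
        proof
          show "h ` {p. p < m \<and> grp p = i} \<subseteq> {i} \<times> C' i"
          proof
            fix x assume "x \<in> h ` {p. p < m \<and> grp p = i}"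
            then obtain p where p: "p < m" "grp p = i" "x = h p" by auto
            then have "x \<in> Sg" using hS by auto
            then show "x \<in> {i} \<times> C' i" using p unfolding Sg_def grp_def by (cases x) auto
          qed
          show "{i} \<times> C' i \<subseteq> h ` {p. p < m \<and> grp p = i}"
          proof
            fix x assume x: "x \<in> {i} \<times> C' i"
            then have "x \<in> Sg" unfolding Sg_def using i by auto
            then obtain p where "p < m" "x = h p" using h' by (auto simp: bij_betw_def)
            then show "x \<in> h ` {p. p < m \<and> grp p = i}" using x unfolding grp_def by auto
          qed
        qed
      qed
      then show ?thesis unfolding Bp_def by (rule sum.reindex_bij_betw[symmetric])
    qed
    finally show "measure (M \<omega>) (D i) = (\<Sum>p\<in>{p. p < m \<and> grp p = i}. measure (M \<omega>) (Bp p))" .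
  qed
qed

lemma assoc_test_cont: "assoc_prop P Y n test_fun b \<Longrightarrow> assoc_prop P Y n cont_test b"
  unfolding assoc_prop_def using cov_ok_test_cont by blast

lemma assoc_cont_test:
  fixes Y :: "nat \<Rightarrow> 'w \<Rightarrow> real"
  assumes P: "prob_space P" and Ym: "\<And>i. i < n \<Longrightarrow> Y i \<in> borel_measurable P"
    and ok: "assoc_prop P Y n cont_test b"
  shows "assoc_prop P Y n test_fun b"
  unfolding assoc_prop_def
proof (intro allI impI)
  fix J assume J: "J \<subseteq> {..<n}"
  show "cov_ok P Y J (if b then {..<n} - J else J) (if b then 1 else -1) test_fun"
  proof (rule cov_ok_cont_imp_test[OF P])
    show "finite J" using J finite_subset by blast
    show "finite (if b then {..<n} - J else J)" using J finite_subset by auto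
    show "Y i \<in> borel_measurable P" if "i \<in> J \<union> (if b then {..<n} - J else J)" for i
      using that J Ym by (auto split: if_splits)
    show "cov_ok P Y J (if b then {..<n} - J else J) (if b then 1 else -1) cont_test"
      using ok J unfolding assoc_prop_def by blast
  qed
qed

lemma assoc_limit:
  fixes Y :: "nat \<Rightarrow> 'w \<Rightarrow> real"
  assumes P: "prob_space P"
    and Ykm: "\<And>k i. i < n \<Longrightarrow> Yk k i \<in> borel_measurable P"
    and Ym: "\<And>i. i < n \<Longrightarrow> Y i \<in> borel_measurable P"
    and lim: "\<And>\<omega> i. \<omega> \<in> space P \<Longrightarrow> i < n \<Longrightarrow> (\<lambda>k. Yk k i \<omega>) \<longlonglongrightarrow> Y i \<omega>"
    and ok: "\<And>k. assoc_prop P (Yk k) n cont_test b"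
  shows "assoc_prop P Y n cont_test b"
  unfolding assoc_prop_def
proof (intro allI impI)
  fix J assume J: "J \<subseteq> {..<n}"
  have sub: "i < n" if "i \<in> J \<union> (if b then {..<n} - J else J)" for i using that J by (auto split: if_splits)
  show "cov_ok P Y J (if b then {..<n} - J else J) (if b then 1 else -1) cont_test"
    by (rule cov_ok_limit[OF P, where Yk=Yk]) (use sub Ykm Ym lim ok J in \<open>auto simp: assoc_prop_def\<close>)
qed

lemma assoc_cong:
  fixes Y Y' :: "nat \<Rightarrow> 'w \<Rightarrow> real"
  assumes eq: "\<And>i \<omega>. i < n \<Longrightarrow> \<omega> \<in> space P \<Longrightarrow> Y i \<omega> = Y' i \<omega>"
  shows "assoc_prop P Y n T b \<longleftrightarrow> assoc_prop P Y' n T b"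
proof -
  have r: "restrict (\<lambda>i. Y i \<omega>) K = restrict (\<lambda>i. Y' i \<omega>) K" if "K \<subseteq> {..<n}" "\<omega> \<in> space P" for K \<omega>
    using that eq by (intro restrict_ext) auto
  have "cov_ok P Y J K s T \<longleftrightarrow> cov_ok P Y' J K s T" if "J \<subseteq> {..<n}" "K \<subseteq> {..<n}" for J K s
  proof -
    have i1: "integral\<^sup>L P (\<lambda>\<omega>. f (restrict (\<lambda>i. Y i \<omega>) J) * g (restrict (\<lambda>i. Y i \<omega>) K))
        = integral\<^sup>L P (\<lambda>\<omega>. f (restrict (\<lambda>i. Y' i \<omega>) J) * g (restrict (\<lambda>i. Y' i \<omega>) K))" for f g
      using r that by (intro Bochner_Integration.integral_cong) auto
    have i2: "integral\<^sup>L P (\<lambda>\<omega>. f (restrict (\<lambda>i. Y i \<omega>) J)) = integral\<^sup>L P (\<lambda>\<omega>. f (restrict (\<lambda>i. Y' i \<omega>) J))" for f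
      using r that by (intro Bochner_Integration.integral_cong) auto
    have i3: "integral\<^sup>L P (\<lambda>\<omega>. f (restrict (\<lambda>i. Y i \<omega>) K)) = integral\<^sup>L P (\<lambda>\<omega>. f (restrict (\<lambda>i. Y' i \<omega>) K))" for f
      using r that by (intro Bochner_Integration.integral_cong) auto
    show ?thesis unfolding cov_ok_def i1 i2 i3 ..
  qed
  then show ?thesis unfolding assoc_prop_def by (auto split: if_splits)
qed

lemma claim:
  fixes P :: "'w measure" and M :: "'w \<Rightarrow> 'a::metric_space measure" and \<I> :: "'a set set"
    and D :: "nat \<Rightarrow> 'a set"
  assumes P: "prob_space P" and rm: "random_measure P M" and semi: "semiring_of_sets UNIV \<I>"
    and Ib: "\<I> \<subseteq> sets borel" and Ibd: "\<forall>B\<in>\<I>. bounded B" and sig: "sigma_sets UNIV \<I> = sets borel"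
    and diss: "dissecting \<I>"
    and HI: "\<And>n B. n \<ge> 1 \<Longrightarrow> (\<forall>i<n. B i \<in> \<I>) \<Longrightarrow> disjoint_family_on B {..<n} \<Longrightarrow>
              assoc_prop P (\<lambda>i \<omega>. measure (M \<omega>) (B i)) n test_fun b"
    and n: "n \<ge> 1"
  shows "k \<le> n \<Longrightarrow> (\<forall>i<k. D i \<in> sets borel \<and> bounded (D i)) \<Longrightarrow>
    (\<forall>i. k \<le> i \<and> i < n \<longrightarrow> D i \<in> semiring_of_sets.generated_ring \<I>) \<Longrightarrow>
    disjoint_family_on D {..<k} \<Longrightarrow> disjoint_family_on D {k..<n} \<Longrightarrow>
    assoc_prop P (\<lambda>i \<omega>. measure (M \<omega>) (if i < k then D i else D i - (\<Union>j<k. D j))) n cont_test b"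
proof (induction k arbitrary: D)
  case 0
  have "assoc_prop P (\<lambda>i \<omega>. measure (M \<omega>) (D i)) n test_fun b"
    by (rule ring_case[OF rm semi Ib Ibd HI n]) (use 0 in \<open>auto simp: atLeast0LessThan\<close>)
  then show ?case by (simp add: assoc_test_cont)
next
  case (Suc k)
  interpret semiring_of_sets UNIV \<I> by fact
  interpret R: ring_of_sets UNIV generated_ring by (rule generating_ring)
  have ringb: "A \<in> sets borel" "bounded A" if "A \<in> generated_ring" for A
    using ring_props[OF semi Ib Ibd that] by auto
  define U where "U = (\<Union>j<k. D j)"
  have k: "k < n" using Suc.prems(1) by simp
  have Dk: "D k \<in> sets borel" "bounded (D k)" using Suc.prems(2) by auto
  have Db: "D i \<in> sets borel" "bounded (D i)" if "i < k" for i using Suc.prems(2) that by auto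
  have Dr: "D i \<in> generated_ring" if "Suc k \<le> i" "i < n" for i using Suc.prems(3) that by auto
  have Ub: "U \<in> sets borel" unfolding U_def using Db by (intro sets.finite_UN) auto
  have DkU: "D k \<inter> U = {}"
  proof -
    have "D k \<inter> D j = {}" if "j < k" for j
    proof -
      have "k \<in> {..<Suc k}" "j \<in> {..<Suc k}" "k \<noteq> j" using that by auto
      then show ?thesis using Suc.prems(4) unfolding disjoint_family_on_def by blast
    qed
    then show ?thesis unfolding U_def by auto
  qed
  obtain E where E: "E \<in> generated_ring" "D k \<subseteq> E"
  proof -
    have d2: "\<forall>B\<in>sets borel. bounded B \<longrightarrow> (\<exists>C\<subseteq>\<I>. finite C \<and> B \<subseteq> \<Union>C)"
      using diss unfolding dissecting_def by (rule conjunct2)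
    obtain C where C: "C \<subseteq> \<I>" "finite C" "D k \<subseteq> \<Union>C" using d2 Dk by force
    have "C \<subseteq> generated_ring" using C(1) generated_ringI_Basic by blast
    then have "\<Union>C \<in> generated_ring" using C(2) by (intro R.finite_Union)
    then show ?thesis using that C(3) by blast
  qed
  have Eb: "E \<in> sets borel" "bounded E" using ringb[OF E(1)] by auto
  define W where "W B i = (if i < k then D i else if i = k then B - U else D i - (U \<union> B))" for B i
  define Y where "Y B = (\<lambda>i \<omega>. measure (M \<omega>) (W B i))" for B
  define Good where "Good = {B. B \<in> sets borel \<and> B \<subseteq> E \<and> assoc_prop P (Y B) n cont_test b}"
  have Wb: "W B i \<in> sets borel" if "B \<in> sets borel" "i < n" for B i
  proof -
    consider "i < k" | "i = k" | "Suc k \<le> i" by linarith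
    then show ?thesis
    proof cases
      case 1 then show ?thesis using Db unfolding W_def by auto
    next
      case 2 then show ?thesis using Ub that unfolding W_def by auto
    next
      case 3 then show ?thesis using Ub that ringb[OF Dr[OF 3 \<open>i < n\<close>]] unfolding W_def by auto
    qed
  qed
  have Wbd: "bounded (W B i)" if "B \<subseteq> E" "i < n" for B i
  proof -
    consider "i < k" | "i = k" | "Suc k \<le> i" by linarith
    then show ?thesis
    proof cases
      case 1 then show ?thesis using Db unfolding W_def by auto
    next
      case 2 then show ?thesis using Eb that unfolding W_def by (auto intro: bounded_subset)
    next
      case 3 then show ?thesis using ringb[OF Dr[OF 3 \<open>i < n\<close>]] unfolding W_def by (auto intro: bounded_subset)
    qed
  qed
  have Ymeas: "Y B i \<in> borel_measurable P" if "B \<in> sets borel" "i < n" for B i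
    unfolding Y_def using rm_meas[OF rm Wb[OF that]] .
  have finW: "emeasure (M \<omega>) S \<noteq> \<infinity>" if "\<omega> \<in> space P" "S \<in> sets borel" "bounded S" for \<omega> S
    using rm_fin[OF rm that] .
  have ringG: "A \<in> Good" if A: "A \<in> generated_ring" "A \<subseteq> E" for A
  proof -
    define D' where "D' i = (if i < k then D i else if i = k then A else D i - A)" for i
    have UD': "(\<Union>j<k. D' j) = U" unfolding U_def D'_def by auto
    have "assoc_prop P (\<lambda>i \<omega>. measure (M \<omega>) (if i < k then D' i else D' i - (\<Union>j<k. D' j))) n cont_test b"
    proof (rule Suc.IH)
      show "k \<le> n" using k by simp
      show "\<forall>i<k. D' i \<in> sets borel \<and> bounded (D' i)" using Db unfolding D'_def by auto
      show "\<forall>i. k \<le> i \<and> i < n \<longrightarrow> D' i \<in> generated_ring"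
        using A Dr unfolding D'_def by (auto intro!: R.Diff)
      show "disjoint_family_on D' {..<k}"
        using Suc.prems(4) unfolding D'_def disjoint_family_on_def by auto
      show "disjoint_family_on D' {k..<n}"
        unfolding disjoint_family_on_def
      proof (intro ballI impI)
        fix i j assume ij: "i \<in> {k..<n}" "j \<in> {k..<n}" "i \<noteq> j"
        show "D' i \<inter> D' j = {}"
        proof (cases "i = k \<or> j = k")
          case True then show ?thesis using ij unfolding D'_def by auto
        next
          case False
          then have "D i \<inter> D j = {}" using Suc.prems(5) ij unfolding disjoint_family_on_def by auto
          then show ?thesis using False ij unfolding D'_def by auto
        qed
      qed
    qed
    moreover have "(\<lambda>i \<omega>. measure (M \<omega>) (if i < k then D' i else D' i - (\<Union>j<k. D' j))) = Y A"
    proof (intro ext)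
      fix i \<omega>
      have "(if i < k then D' i else D' i - (\<Union>j<k. D' j)) = W A i"
        unfolding UD' unfolding D'_def W_def by auto
      then show "measure (M \<omega>) (if i < k then D' i else D' i - (\<Union>j<k. D' j)) = Y A i \<omega>"
        unfolding Y_def by simp
    qed
    ultimately show ?thesis unfolding Good_def using ringb[OF A(1)] A(2) by auto
  qed
  have incG: "(\<Union>m. A m) \<in> Good" if A: "\<And>m. A m \<in> Good" "\<And>m. A m \<subseteq> A (Suc m)" for A
  proof -
    have Ab: "A m \<in> sets borel" "A m \<subseteq> E" for m using A(1) unfolding Good_def by auto
    have Bb: "(\<Union>m. A m) \<in> sets borel" using Ab by (intro sets.countable_UN) auto
    have BE: "(\<Union>m. A m) \<subseteq> E" using Ab by auto
    have inc: "incseq A" using A(2) by (rule incseq_SucI)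
    have "assoc_prop P (Y (\<Union>m. A m)) n cont_test b"
    proof (rule assoc_limit[OF P, where Yk="\<lambda>m. Y (A m)"])
      show "Y (A m) i \<in> borel_measurable P" if "i < n" for m i using Ymeas[OF Ab(1) that] .
      show "Y (\<Union>m. A m) i \<in> borel_measurable P" if "i < n" for i using Ymeas[OF Bb that] .
      show "assoc_prop P (Y (A m)) n cont_test b" for m using A(1) unfolding Good_def by auto
      fix \<omega> i assume \<omega>: "\<omega> \<in> space P" and i: "i < n"
      have sM: "sets (M \<omega>) = sets borel" by (rule rm_sets[OF rm \<omega>])
      consider "i < k" | "i = k" | "Suc k \<le> i" by linarith
      then show "(\<lambda>m. Y (A m) i \<omega>) \<longlonglongrightarrow> Y (\<Union>m. A m) i \<omega>"
      proof cases
        case 1 then show ?thesis unfolding Y_def W_def by simp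
      next
        case 2
        have "(\<lambda>m. measure (M \<omega>) (A m - U)) \<longlonglongrightarrow> measure (M \<omega>) (\<Union>m. A m - U)"
        proof (rule Lim_measure_incseq)
          show "range (\<lambda>m. A m - U) \<subseteq> sets (M \<omega>)" using Ab Ub sM by auto
          show "incseq (\<lambda>m. A m - U)" using inc by (auto simp: incseq_def)
          have "(\<Union>m. A m - U) \<in> sets borel" "bounded (\<Union>m. A m - U)"
            using Bb Ub BE Eb by (auto intro: bounded_subset)
          then show "emeasure (M \<omega>) (\<Union>m. A m - U) \<noteq> \<infinity>" using finW[OF \<omega>] by blast
        qed
        moreover have "(\<Union>m. A m - U) = (\<Union>m. A m) - U" by auto
        ultimately show ?thesis using 2 unfolding Y_def W_def by simp
      next
        case 3
        have Di: "D i \<in> sets borel" "bounded (D i)" using ringb[OF Dr[OF 3 i]] by auto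
        have "(\<lambda>m. measure (M \<omega>) (D i - (U \<union> A m))) \<longlonglongrightarrow> measure (M \<omega>) (\<Inter>m. D i - (U \<union> A m))"
        proof (rule Lim_measure_decseq)
          show "range (\<lambda>m. D i - (U \<union> A m)) \<subseteq> sets (M \<omega>)" using Ab Ub sM Di by auto
          show "decseq (\<lambda>m. D i - (U \<union> A m))" using inc by (auto simp: incseq_def decseq_def)
          fix m
          have "D i - (U \<union> A m) \<in> sets borel" "bounded (D i - (U \<union> A m))"
            using Di Ub Ab by (auto intro: bounded_subset)
          then show "emeasure (M \<omega>) (D i - (U \<union> A m)) \<noteq> \<infinity>" using finW[OF \<omega>] by blast
        qed
        moreover have "(\<Inter>m. D i - (U \<union> A m)) = D i - (U \<union> (\<Union>m. A m))" by auto
        ultimately show ?thesis using 3 unfolding Y_def W_def by simp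
      qed
    qed
    then show ?thesis unfolding Good_def using Bb BE by auto
  qed
  have decG: "(\<Inter>m. A m) \<in> Good" if A: "\<And>m. A m \<in> Good" "\<And>m. A (Suc m) \<subseteq> A m" for A
  proof -
    have Ab: "A m \<in> sets borel" "A m \<subseteq> E" for m using A(1) unfolding Good_def by auto
    have Bb: "(\<Inter>m. A m) \<in> sets borel" using Ab by (intro sets.countable_INT) auto
    have BE: "(\<Inter>m. A m) \<subseteq> E" using Ab(2)[of 0] by blast
    have dec: "decseq A" using A(2) by (rule decseq_SucI)
    have "assoc_prop P (Y (\<Inter>m. A m)) n cont_test b"
    proof (rule assoc_limit[OF P, where Yk="\<lambda>m. Y (A m)"])
      show "Y (A m) i \<in> borel_measurable P" if "i < n" for m i using Ymeas[OF Ab(1) that] .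
      show "Y (\<Inter>m. A m) i \<in> borel_measurable P" if "i < n" for i using Ymeas[OF Bb that] .
      show "assoc_prop P (Y (A m)) n cont_test b" for m using A(1) unfolding Good_def by auto
      fix \<omega> i assume \<omega>: "\<omega> \<in> space P" and i: "i < n"
      have sM: "sets (M \<omega>) = sets borel" by (rule rm_sets[OF rm \<omega>])
      consider "i < k" | "i = k" | "Suc k \<le> i" by linarith
      then show "(\<lambda>m. Y (A m) i \<omega>) \<longlonglongrightarrow> Y (\<Inter>m. A m) i \<omega>"
      proof cases
        case 1 then show ?thesis unfolding Y_def W_def by simp
      next
        case 2
        have "(\<lambda>m. measure (M \<omega>) (A m - U)) \<longlonglongrightarrow> measure (M \<omega>) (\<Inter>m. A m - U)"
        proof (rule Lim_measure_decseq)
          show "range (\<lambda>m. A m - U) \<subseteq> sets (M \<omega>)" using Ab Ub sM by auto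
          show "decseq (\<lambda>m. A m - U)" using dec by (auto simp: decseq_def)
          fix m
          have "A m - U \<in> sets borel" "bounded (A m - U)"
            using Ab Ub Eb by (auto intro: bounded_subset)
          then show "emeasure (M \<omega>) (A m - U) \<noteq> \<infinity>" using finW[OF \<omega>] by blast
        qed
        moreover have "(\<Inter>m. A m - U) = (\<Inter>m. A m) - U" by auto
        ultimately show ?thesis using 2 unfolding Y_def W_def by simp
      next
        case 3
        have Di: "D i \<in> sets borel" "bounded (D i)" using ringb[OF Dr[OF 3 i]] by auto
        have "(\<lambda>m. measure (M \<omega>) (D i - (U \<union> A m))) \<longlonglongrightarrow> measure (M \<omega>) (\<Union>m. D i - (U \<union> A m))"
        proof (rule Lim_measure_incseq)
          show "range (\<lambda>m. D i - (U \<union> A m)) \<subseteq> sets (M \<omega>)" using Ab Ub sM Di by auto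
          show "incseq (\<lambda>m. D i - (U \<union> A m))" using dec by (auto simp: incseq_def decseq_def)
          have "(\<Union>m. D i - (U \<union> A m)) \<in> sets borel" "bounded (\<Union>m. D i - (U \<union> A m))"
            using Di Ub Ab by (auto intro: bounded_subset)
          then show "emeasure (M \<omega>) (\<Union>m. D i - (U \<union> A m)) \<noteq> \<infinity>" using finW[OF \<omega>] by blast
        qed
        moreover have "(\<Union>m. D i - (U \<union> A m)) = D i - (U \<union> (\<Inter>m. A m))" by auto
        ultimately show ?thesis using 3 unfolding Y_def W_def by simp
      qed
    qed
    then show ?thesis unfolding Good_def using Bb BE by auto
  qed
  have alg: "algebra E ((\<inter>) E ` generated_ring)"
    unfolding algebra_iff_Un
  proof (intro conjI ballI)
    show "(\<inter>) E ` generated_ring \<subseteq> Pow E" by auto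
    show "{} \<in> (\<inter>) E ` generated_ring" using generated_ring_empty by (auto intro!: image_eqI[of _ _ "{}"])
    fix a assume "a \<in> (\<inter>) E ` generated_ring"
    then obtain r where r: "r \<in> generated_ring" "a = E \<inter> r" by auto
    have "E - a = E \<inter> (E - r)" using r by auto
    then show "E - a \<in> (\<inter>) E ` generated_ring" using r E by (auto intro!: R.Diff)
    fix c assume "c \<in> (\<inter>) E ` generated_ring"
    then obtain t where t: "t \<in> generated_ring" "c = E \<inter> t" by auto
    have "a \<union> c = E \<inter> (r \<union> t)" using r t by auto
    then show "a \<union> c \<in> (\<inter>) E ` generated_ring" using r t by (auto intro!: R.Un)
  qed
  have sub: "sigma_sets E ((\<inter>) E ` generated_ring) \<subseteq> Good"
  proof (rule algebra.monotone_class[OF alg])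
    show "(\<inter>) E ` generated_ring \<subseteq> Good"
      using E by (auto intro!: ringG R.Int)
    show "\<And>A. (\<And>n. A n \<in> Good) \<Longrightarrow> (\<And>n. A n \<subseteq> A (Suc n)) \<Longrightarrow> (\<Union>n. A n) \<in> Good" by (rule incG)
    show "\<And>A. (\<And>n. A n \<in> Good) \<Longrightarrow> (\<And>n. A (Suc n) \<subseteq> A n) \<Longrightarrow> (\<Inter>n. A n) \<in> Good" by (rule decG)
  qed
  have "D k \<in> sigma_sets E ((\<inter>) E ` generated_ring)"
  proof -
    have "(\<inter>) E ` sigma_sets UNIV generated_ring = sigma_sets E ((\<inter>) E ` generated_ring)"
      using E by (intro sigma_sets_Int) auto
    moreover have "D k \<in> sigma_sets UNIV generated_ring"
      using Dk sig sigma_sets_generated_ring_eq by simp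
    moreover have "E \<inter> D k = D k" using E by auto
    ultimately show ?thesis by (metis image_eqI)
  qed
  with sub have "D k \<in> Good" by auto
  then have "assoc_prop P (Y (D k)) n cont_test b" unfolding Good_def by auto
  moreover have "Y (D k) = (\<lambda>i \<omega>. measure (M \<omega>) (if i < Suc k then D i else D i - (\<Union>j<Suc k. D j)))"
  proof -
    have "(\<Union>j<Suc k. D j) = D k \<union> U" unfolding U_def by (auto simp: lessThan_Suc)
    then have "W (D k) i = (if i < Suc k then D i else D i - (\<Union>j<Suc k. D j))" for i
      unfolding W_def using DkU less_Suc_eq[of i k] by auto
    then show ?thesis unfolding Y_def by (intro ext) simp
  qed
  ultimately show ?case by simp
qed

lemma main_dir:
  fixes P :: "'w measure" and M :: "'w \<Rightarrow> 'a::metric_space measure" and \<I> :: "'a set set"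
  assumes P: "prob_space P" and rm: "random_measure P M" and semi: "semiring_of_sets UNIV \<I>"
    and Ib: "\<I> \<subseteq> sets borel" and Ibd: "\<forall>B\<in>\<I>. bounded B" and sig: "sigma_sets UNIV \<I> = sets borel"
    and diss: "dissecting \<I>"
    and HI: "\<forall>n::nat. \<forall>B::nat \<Rightarrow> 'a set. n \<ge> 1 \<longrightarrow> (\<forall>i<n. B i \<in> \<I>) \<longrightarrow> disjoint_family_on B {..<n} \<longrightarrow>
              assoc_prop P (\<lambda>i \<omega>. measure (M \<omega>) (B i)) n test_fun b"
  shows "\<forall>n::nat. \<forall>B::nat \<Rightarrow> 'a set. n \<ge> 1 \<longrightarrow> (\<forall>i<n. B i \<in> sets borel \<and> bounded (B i)) \<longrightarrow>
              disjoint_family_on B {..<n} \<longrightarrow> assoc_prop P (\<lambda>i \<omega>. measure (M \<omega>) (B i)) n test_fun b"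
proof (intro allI impI)
  fix n :: nat and B :: "nat \<Rightarrow> 'a set"
  assume n: "n \<ge> 1" and B: "\<forall>i<n. B i \<in> sets borel \<and> bounded (B i)" and disj: "disjoint_family_on B {..<n}"
  have HI': "\<And>n B. n \<ge> 1 \<Longrightarrow> (\<forall>i<n. B i \<in> \<I>) \<Longrightarrow> disjoint_family_on B {..<n} \<Longrightarrow>
              assoc_prop P (\<lambda>i \<omega>. measure (M \<omega>) (B i)) n test_fun b" using HI by blast
  have "assoc_prop P (\<lambda>i \<omega>. measure (M \<omega>) (if i < n then B i else B i - (\<Union>j<n. B j))) n cont_test b"
    by (rule claim[OF P rm semi Ib Ibd sig diss HI' n]) (use B disj in \<open>auto simp: disjoint_family_on_def\<close>)
  then have "assoc_prop P (\<lambda>i \<omega>. measure (M \<omega>) (B i)) n cont_test b"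
    by (subst assoc_cong[where Y'="\<lambda>i \<omega>. measure (M \<omega>) (if i < n then B i else B i - (\<Union>j<n. B j))"]) auto
  then show "assoc_prop P (\<lambda>i \<omega>. measure (M \<omega>) (B i)) n test_fun b"
    by (rule assoc_cont_test[OF P, rotated]) (use B rm_meas[OF rm] in auto)
qed

theorem lemma4p5:
  fixes P :: "'w measure" and M :: "'w \<Rightarrow> 'a::polish_space measure"
    and \<I> :: "'a set set"
  assumes "prob_space P"
    and "random_measure P M"
    and "countable \<I>"
    and "semiring_of_sets UNIV \<I>"
    and "\<I> \<subseteq> sets borel"
    and "\<forall>B\<in>\<I>. bounded B"
    and "sigma_sets UNIV \<I> = sets borel"
    and "dissecting \<I>"
  shows "((\<forall>n::nat. \<forall>B::nat \<Rightarrow> 'a set. n \<ge> 1 \<longrightarrow> (\<forall>i<n. B i \<in> \<I>) \<longrightarrow>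
              disjoint_family_on B {..<n} \<longrightarrow>
              neg_assoc P (\<lambda>i \<omega>. measure (M \<omega>) (B i)) {..<n})
          \<longleftrightarrow>
          (\<forall>n::nat. \<forall>B::nat \<Rightarrow> 'a set. n \<ge> 1 \<longrightarrow>
              (\<forall>i<n. B i \<in> sets borel \<and> bounded (B i)) \<longrightarrow>
              disjoint_family_on B {..<n} \<longrightarrow>
              neg_assoc P (\<lambda>i \<omega>. measure (M \<omega>) (B i)) {..<n}))
       \<and>
         ((\<forall>n::nat. \<forall>B::nat \<Rightarrow> 'a set. n \<ge> 1 \<longrightarrow> (\<forall>i<n. B i \<in> \<I>) \<longrightarrow>
              disjoint_family_on B {..<n} \<longrightarrow>
              pos_assoc P (\<lambda>i \<omega>. measure (M \<omega>) (B i)) {..<n})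
          \<longleftrightarrow>
          (\<forall>n::nat. \<forall>B::nat \<Rightarrow> 'a set. n \<ge> 1 \<longrightarrow>
              (\<forall>i<n. B i \<in> sets borel \<and> bounded (B i)) \<longrightarrow>
              disjoint_family_on B {..<n} \<longrightarrow>
              pos_assoc P (\<lambda>i \<omega>. measure (M \<omega>) (B i)) {..<n}))"
proof -
  have gen: "(\<forall>n::nat. \<forall>B::nat \<Rightarrow> 'a set. n \<ge> 1 \<longrightarrow> (\<forall>i<n. B i \<in> \<I>) \<longrightarrow>
              disjoint_family_on B {..<n} \<longrightarrow> assoc_prop P (\<lambda>i \<omega>. measure (M \<omega>) (B i)) n test_fun b)
        \<longleftrightarrow> (\<forall>n::nat. \<forall>B::nat \<Rightarrow> 'a set. n \<ge> 1 \<longrightarrow> (\<forall>i<n. B i \<in> sets borel \<and> bounded (B i)) \<longrightarrow>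
              disjoint_family_on B {..<n} \<longrightarrow> assoc_prop P (\<lambda>i \<omega>. measure (M \<omega>) (B i)) n test_fun b)" for b
  proof
    assume "\<forall>n::nat. \<forall>B::nat \<Rightarrow> 'a set. n \<ge> 1 \<longrightarrow> (\<forall>i<n. B i \<in> \<I>) \<longrightarrow>
              disjoint_family_on B {..<n} \<longrightarrow> assoc_prop P (\<lambda>i \<omega>. measure (M \<omega>) (B i)) n test_fun b"
    then show "\<forall>n::nat. \<forall>B::nat \<Rightarrow> 'a set. n \<ge> 1 \<longrightarrow> (\<forall>i<n. B i \<in> sets borel \<and> bounded (B i)) \<longrightarrow>
              disjoint_family_on B {..<n} \<longrightarrow> assoc_prop P (\<lambda>i \<omega>. measure (M \<omega>) (B i)) n test_fun b"
      by (rule main_dir[OF assms(1,2,4,5,6,7,8)])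
  next
    assume h: "\<forall>n::nat. \<forall>B::nat \<Rightarrow> 'a set. n \<ge> 1 \<longrightarrow> (\<forall>i<n. B i \<in> sets borel \<and> bounded (B i)) \<longrightarrow>
              disjoint_family_on B {..<n} \<longrightarrow> assoc_prop P (\<lambda>i \<omega>. measure (M \<omega>) (B i)) n test_fun b"
    show "\<forall>n::nat. \<forall>B::nat \<Rightarrow> 'a set. n \<ge> 1 \<longrightarrow> (\<forall>i<n. B i \<in> \<I>) \<longrightarrow>
              disjoint_family_on B {..<n} \<longrightarrow> assoc_prop P (\<lambda>i \<omega>. measure (M \<omega>) (B i)) n test_fun b"
    proof (intro allI impI)
      fix n :: nat and B :: "nat \<Rightarrow> 'a set"
      assume "n \<ge> 1" "\<forall>i<n. B i \<in> \<I>" "disjoint_family_on B {..<n}"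
      then show "assoc_prop P (\<lambda>i \<omega>. measure (M \<omega>) (B i)) n test_fun b"
        using h assms(5,6) by blast
    qed
  qed
  show ?thesis unfolding neg_assoc_prop pos_assoc_prop using gen[of True] gen[of False] by blast
qed

end
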